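(* (I) The positive cone $C_+^\dagger$ is equal to $\widehat{\mathbf{n}}_{\Lambda,+}(D^\dagger)$, the dual cone of $\mathbf{n}_{\Lambda,+}$ in $D^\dagger$. (II) The non-negative divisors in the first quadrant of $D^\dagger$ are given by $$C_+^\dagger\cap D_+^\dagger=\{\varrho\in D_+^\dagger:\langle\varrho,n^{\delta'}_{\mathfrak{s}}\rangle\ge0\text{ for all }\mathfrak{s}\in\Lambda^{(n-1)},\ \delta'\in\Lambda^{(0)}\setminus\mathfrak{s}\text{ with }\mathfrak{s}^\perp_{\delta'}\setminus\mathfrak{s}\ne\emptyset\},$$ $$\mathrm{Int}(C_+^\dagger)\cap\mathrm{Int}(D_+^\dagger)=\{\varrho\in \mathrm{Int}(D_+^\dagger):\langle\varrho,n^{\delta'}_{\mathfrak{s}}\rangle>0\text{ for all }\mathfrak{s}\in\Lambda^{(n-1)},\ \delta'\in\Lambda^{(0)}\setminus\mathfrak{s}\text{ with }\mathfrak{s}^\perp_{\delta'}\setminus\mathfrak{s}\ne\emptyset\},$$ and these satisfy $\iota^*(C_+^\dagger\cap D_+^\dagger)=\mathbf{n}^\dagger_{\Lambda,+}$ and $\iota^*(\mathrm{Int}(C_+^\dagger)\cap\mathrm{Int}(D_+^\dagger))=\mathrm{Int}(\mathbf{n}^\dagger_{\Lambda,+})$.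
   Context: $L$ is a lattice of rank $n$ with dual $L^*$; $(\Delta,L)$ is a reflexive polytope in $L_{\mathbb{R}}$ and $\Lambda$ a simplicial decomposition of $\partial\Delta$ with vertex set $\Lambda^{(0)}=L\cap(\partial\Delta\setminus\bigcup\{\mathrm{Int}(F):F\text{ facet of }\Delta\})$, $L$ generated by $\Lambda^{(0)}$; $\Lambda^{(n-1)}$ is the set of $(n-1)$-simplices, and "$\delta\in\mathfrak{s}$" means $\delta$ is a vertex of $\mathfrak{s}$. $D_\Delta=\bigoplus_{\delta\in\Lambda^{(0)}}\mathbb{Z}e^\delta$, $\beta:D_\Delta\to L$, $e^\delta\mapsto\delta$, $\mathbf{n}_\Delta=\ker\beta$, $\iota:\mathbf{n}_\Delta\hookrightarrow D_\Delta$ the inclusion; $D^\dagger=D_\Delta^\dagger\otimes\mathbb{Q}$ with basis $e^{\delta\dagger}$ dual to $e^\delta$, $\iota^*:D^\dagger\to\mathbf{n}_\Delta^\dagger\otimes\mathbb{Q}$ the restriction, $\beta^*:L^*_{\mathbb{Q}}\to D^\dagger$ the dual of $\beta$. $D_+^\dagger=\{\varrho\in D^\dagger:\langle\varrho,e^\delta\rangle\ge0\ \forall\delta\}$, with interior given by strict inequalities. For $\delta\in\Lambda^{(0)}$, $\mathfrak{s}^\perp_\delta$ is the unique simplex of $\Lambda$ whose relative interior contains $-\delta$. For $\mathfrak{s}\in\Lambda^{(n-1)}$ and $\delta'\in\Lambda^{(0)}\setminus\mathfrak{s}$ define $n^{\delta'}_{\mathfrak{s}}=e^{\delta'}+\sum_{\delta\in\mathfrak{s}}n^{\delta'}_{\delta,\mathfrak{s}}e^\delta\in\mathbf{n}_\Delta\otimes\mathbb{Q}$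 where the rationals $n^{\delta'}_{\delta,\mathfrak{s}}$ are determined by $\delta'+\sum_{\delta\in\mathfrak{s}}n^{\delta'}_{\delta,\mathfrak{s}}\delta=0$ in $L_{\mathbb{Q}}$. Let $\mathbf{n}_{\Lambda,+}=\sum_{\mathfrak{s},\delta'}\mathbb{Q}_{\ge0}n^{\delta'}_{\mathfrak{s}}\subseteq\mathbf{n}_\Delta\otimes\mathbb{Q}$, $\mathbf{n}^\dagger_{\Lambda,+}$ its dual cone in $\mathbf{n}_\Delta^\dagger\otimes\mathbb{Q}$, and $\widehat{\mathbf{n}}_{\Lambda,+}(D^\dagger)=\{\varrho\in D^\dagger:\langle\varrho,n\rangle\ge0\ \forall n\in\mathbf{n}_{\Lambda,+}\}$. For $\varrho\in D^\dagger$ and $\mathfrak{s}\in\Lambda^{(n-1)}$, let $\varrho'_{\mathfrak{s}}$ be the unique element of $\beta^*(L^*_{\mathbb{Q}})$ with $\langle\varrho'_{\mathfrak{s}},e^\delta\rangle=\langle\varrho,e^\delta\rangle$ for all $\delta\in\mathfrak{s}$, and $\varrho_{\mathfrak{s}}=\varrho-\varrho'_{\mathfrak{s}}$. The positive cone is $C_+^\dagger=\{\varrho\in D^\dagger:\langle\varrho_{\mathfrak{s}},e^{\delta'}\rangle\ge0\text{ for all }\mathfrak{s}\in\Lambda^{(n-1)},\ \delta'\in\Lambda^{(0)}\setminus\mathfrak{s}\}$. *)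

theory Defs
  imports "HOL-Analysis.Analysis"
begin

text \<open>The lattice L of rank n is identified with the integer points of real^'n
  (n = CARD('n)); L^* is identified with the integer points of the dual via the
  standard inner product.\<close>

definition lattice_pts :: "(real ^ 'n::finite) set" where
  "lattice_pts = {x. \<forall>i. x $ i \<in> \<int>}"

definition lattice_polytope :: "(real ^ 'n::finite) set \<Rightarrow> bool" where
  "lattice_polytope P \<longleftrightarrow> (\<exists>S. finite S \<and> S \<subseteq> lattice_pts \<and> P = convex hull S)"

definition polar_dual :: "(real ^ 'n::finite) set \<Rightarrow> (real ^ 'n) set" where
  "polar_dual P = {y. \<forall>x\<in>P. x \<bullet> y \<ge> -1}"

definition reflexive_polytope :: "(real ^ 'n::finite) set \<Rightarrow> bool" where
  "reflexive_polytope P \<longleftrightarrow> lattice_polytope P \<and> 0 \<in> interior P \<and> lattice_polytope (polar_dual P)"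

definition admissible_pts :: "(real ^ 'n::finite) set \<Rightarrow> (real ^ 'n) set" where
  "admissible_pts P = lattice_pts \<inter> (frontier P - \<Union>{rel_interior F | F. F facet_of P})"

text \<open>A simplicial decomposition (triangulation) of a set S, simplices given by their vertex sets.\<close>
definition simplicial_decomp :: "(real ^ 'n::finite) set set \<Rightarrow> (real ^ 'n) set \<Rightarrow> bool" where
  "simplicial_decomp \<Lambda> S \<longleftrightarrow>
     finite \<Lambda> \<and>
     (\<forall>s\<in>\<Lambda>. s \<noteq> {} \<and> finite s \<and> \<not> affine_dependent s) \<and>
     (\<forall>s\<in>\<Lambda>. \<forall>t. t \<noteq> {} \<longrightarrow> t \<subseteq> s \<longrightarrow> t \<in> \<Lambda>) \<and>
     (\<forall>s\<in>\<Lambda>. \<forall>t\<in>\<Lambda>. convex hull s \<inter> convex hull t = convex hull (s \<inter> t)) \<and>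
     \<Union>((\<lambda>s. convex hull s) ` \<Lambda>) = S"

definition verts :: "(real ^ 'n::finite) set set \<Rightarrow> (real ^ 'n) set" where
  "verts \<Lambda> = \<Union>\<Lambda>"

definition top_simplices :: "(real ^ 'n::finite) set set \<Rightarrow> (real ^ 'n) set set" where
  "top_simplices \<Lambda> = {s\<in>\<Lambda>. card s = CARD('n)}"

definition lattice_generated_by :: "(real ^ 'n::finite) set \<Rightarrow> bool" where
  "lattice_generated_by V \<longleftrightarrow>
     (\<forall>x\<in>lattice_pts. \<exists>c :: real ^ 'n \<Rightarrow> int. x = (\<Sum>v\<in>V. of_int (c v) *\<^sub>R v))"

definition sperp :: "(real ^ 'n::finite) set set \<Rightarrow> real ^ 'n \<Rightarrow> (real ^ 'n) set" where
  "sperp \<Lambda> d = (THE s. s \<in> \<Lambda> \<and>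
      (\<exists>c :: real ^ 'n \<Rightarrow> real. (\<forall>v\<in>s. c v > 0) \<and> - d = (\<Sum>v\<in>s. c v *\<^sub>R v)))"

text \<open>Elements of D_Delta (x) Q and of D^dagger are rational functions on Lambda^(0),
  extended by zero outside.\<close>
definition Ddag :: "(real ^ 'n::finite) set \<Rightarrow> (real ^ 'n \<Rightarrow> rat) set" where
  "Ddag V = {r. \<forall>x. x \<notin> V \<longrightarrow> r x = 0}"

definition dpair :: "(real ^ 'n::finite) set \<Rightarrow> (real ^ 'n \<Rightarrow> rat) \<Rightarrow> (real ^ 'n \<Rightarrow> rat) \<Rightarrow> rat" where
  "dpair V r m = (\<Sum>v\<in>V. r v * m v)"

definition Dplus :: "(real ^ 'n::finite) set \<Rightarrow> (real ^ 'n \<Rightarrow> rat) set" where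
  "Dplus V = {r\<in>Ddag V. \<forall>v\<in>V. r v \<ge> 0}"

definition Dplus_int :: "(real ^ 'n::finite) set \<Rightarrow> (real ^ 'n \<Rightarrow> rat) set" where
  "Dplus_int V = {r\<in>Ddag V. \<forall>v\<in>V. r v > 0}"

text \<open>Topological interior inside the rational vector space D^dagger (sup-norm balls).\<close>
definition Dinterior :: "(real ^ 'n::finite) set \<Rightarrow> (real ^ 'n \<Rightarrow> rat) set \<Rightarrow> (real ^ 'n \<Rightarrow> rat) set" where
  "Dinterior V S = {r\<in>S. \<exists>e>0. \<forall>r'\<in>Ddag V. (\<forall>v\<in>V. \<bar>r' v - r v\<bar> < e) \<longrightarrow> r' \<in> S}"

text \<open>n_Delta (x) Q = ker beta (x) Q.\<close>
definition Nsp :: "(real ^ 'n::finite) set \<Rightarrow> (real ^ 'n \<Rightarrow> rat) set" where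
  "Nsp V = {m\<in>Ddag V. (\<Sum>v\<in>V. real_of_rat (m v) *\<^sub>R v) = 0}"

text \<open>n^{delta'}_s = e^{delta'} + sum_{delta in s} n^{delta'}_{delta,s} e^delta.\<close>
definition nvec :: "(real ^ 'n::finite) set \<Rightarrow> real ^ 'n \<Rightarrow> (real ^ 'n \<Rightarrow> rat)" where
  "nvec s d = (THE c. c d = 1 \<and> (\<forall>v. v \<notin> insert d s \<longrightarrow> c v = 0) \<and>
                      (\<Sum>v\<in>insert d s. real_of_rat (c v) *\<^sub>R v) = 0)"

definition gen_pairs :: "(real ^ 'n::finite) set set \<Rightarrow> ((real ^ 'n) set \<times> (real ^ 'n)) set" where
  "gen_pairs \<Lambda> = {(s, d). s \<in> top_simplices \<Lambda> \<and> d \<in> verts \<Lambda> - s}"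

definition ncone :: "(real ^ 'n::finite) set set \<Rightarrow> (real ^ 'n \<Rightarrow> rat) set" where
  "ncone \<Lambda> = {m. \<exists>a :: (real ^ 'n) set \<times> (real ^ 'n) \<Rightarrow> rat. (\<forall>p. a p \<ge> 0) \<and>
        m = (\<lambda>x. \<Sum>p\<in>gen_pairs \<Lambda>. a p * nvec (fst p) (snd p) x)}"

definition nhat :: "(real ^ 'n::finite) set set \<Rightarrow> (real ^ 'n \<Rightarrow> rat) set" where
  "nhat \<Lambda> = {r\<in>Ddag (verts \<Lambda>). \<forall>m\<in>ncone \<Lambda>. dpair (verts \<Lambda>) r m \<ge> 0}"

definition betastar :: "(real ^ 'n::finite) set \<Rightarrow> (real ^ 'n \<Rightarrow> rat) set" where
  "betastar V = {r\<in>Ddag V. \<exists>u :: 'n \<Rightarrow> rat.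
       \<forall>v\<in>V. real_of_rat (r v) = (\<Sum>i\<in>UNIV. real_of_rat (u i) * v $ i)}"

definition rho_prime :: "(real ^ 'n::finite) set set \<Rightarrow> (real ^ 'n \<Rightarrow> rat) \<Rightarrow> (real ^ 'n) set \<Rightarrow> (real ^ 'n \<Rightarrow> rat)" where
  "rho_prime \<Lambda> r s = (THE r'. r' \<in> betastar (verts \<Lambda>) \<and> (\<forall>d\<in>s. r' d = r d))"

definition Cplus :: "(real ^ 'n::finite) set set \<Rightarrow> (real ^ 'n \<Rightarrow> rat) set" where
  "Cplus \<Lambda> = {r\<in>Ddag (verts \<Lambda>). \<forall>s\<in>top_simplices \<Lambda>. \<forall>d\<in>verts \<Lambda> - s.
       r d - rho_prime \<Lambda> r s d \<ge> 0}"

text \<open>n_Delta^dagger (x) Q = Hom_Q(n_Delta (x) Q, Q): Q-linear functionals on Nsp V,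
  extended by zero outside Nsp V.\<close>
definition Ndag :: "(real ^ 'n::finite) set \<Rightarrow> ((real ^ 'n \<Rightarrow> rat) \<Rightarrow> rat) set" where
  "Ndag V = {f. (\<forall>m. m \<notin> Nsp V \<longrightarrow> f m = 0) \<and>
     (\<forall>a b m m'. m \<in> Nsp V \<longrightarrow> m' \<in> Nsp V \<longrightarrow>
        f (\<lambda>x. a * m x + b * m' x) = a * f m + b * f m')}"

text \<open>iota^*: restriction of a functional on D_Delta (x) Q to n_Delta (x) Q.\<close>
definition iota_star :: "(real ^ 'n::finite) set \<Rightarrow> (real ^ 'n \<Rightarrow> rat) \<Rightarrow> ((real ^ 'n \<Rightarrow> rat) \<Rightarrow> rat)" where
  "iota_star V r = (\<lambda>m. if m \<in> Nsp V then dpair V r m else 0)"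

definition ndag_cone :: "(real ^ 'n::finite) set set \<Rightarrow> ((real ^ 'n \<Rightarrow> rat) \<Rightarrow> rat) set" where
  "ndag_cone \<Lambda> = {f\<in>Ndag (verts \<Lambda>). \<forall>m\<in>ncone \<Lambda>. f m \<ge> 0}"

text \<open>Topological interior inside the finite-dimensional rational space n_Delta^dagger (x) Q
  (balls for the operator norm w.r.t. the l1-norm on n_Delta (x) Q).\<close>
definition Ninterior :: "(real ^ 'n::finite) set \<Rightarrow> ((real ^ 'n \<Rightarrow> rat) \<Rightarrow> rat) set \<Rightarrow> ((real ^ 'n \<Rightarrow> rat) \<Rightarrow> rat) set" where
  "Ninterior V S = {f\<in>S. \<exists>e>0. \<forall>g\<in>Ndag V.
      (\<forall>m\<in>Nsp V. \<bar>g m - f m\<bar> \<le> e * (\<Sum>v\<in>V. \<bar>m v\<bar>)) \<longrightarrow> g \<in> S}"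

end

theory Submission
  imports Defs
begin

lemma det_Rats:
  fixes A :: "real^'n^'n"
  assumes "\<And>i j. A$i$j \<in> \<rat>"
  shows "det A \<in> \<rat>"
  unfolding det_def using assms by (intro Rats_sum Rats_mult Rats_prod) auto

lemma rat_solve:
  fixes A :: "real^'n^'n"
  assumes "det A \<noteq> 0" "\<And>i j. A$i$j \<in> \<rat>" "\<And>i. b$i \<in> \<rat>"
  shows "\<exists>x. A *v x = b \<and> (\<forall>k. x$k \<in> \<rat>)"
proof -
  define x where "x = (\<chi> k. det(\<chi> i j. if j=k then b$i else A$i$j) / det A)"
  have "A *v x = b" using cramer[OF assms(1)] x_def by blast
  moreover have "x$k \<in> \<rat>" for k
    unfolding x_def using assms by (auto intro!: Rats_divide det_Rats)
  ultimately show ?thesis by blast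
qed

lemma basis_solve:
  fixes s :: "(real^'n) set"
  assumes ind: "independent s" and card: "card s = CARD('n)"
  shows "\<exists>g. bij_betw g UNIV s \<and> det (\<chi> i j. g j $ i :: real^'n^'n) \<noteq> 0"
proof -
  have fin: "finite s" using ind card card.infinite by force
  obtain g where g: "bij_betw g (UNIV::'n set) s"
    using finite_same_card_bij[of "UNIV::'n set" s] fin card by auto
  define A :: "real^'n^'n" where "A = (\<chi> i j. g j $ i)"
  have Av: "A *v x = (\<Sum>j\<in>UNIV. x$j *\<^sub>R g j)" for x
    by (simp add: A_def matrix_vector_mult_def vec_eq_iff mult.commute)
  have "inj (\<lambda>x. A *v x)"
  proof (rule linear_injective_0[THEN iffD2])
    show "linear ((*v) A)" by simp
    show "\<forall>x. A *v x = 0 \<longrightarrow> x = 0"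
    proof (intro allI impI)
      fix x assume "A *v x = 0"
      hence "(\<Sum>j\<in>UNIV. x$j *\<^sub>R g j) = 0" using Av by simp
      moreover have "(\<Sum>j\<in>UNIV. x$j *\<^sub>R g j) = (\<Sum>v\<in>s. x$(inv_into UNIV g v) *\<^sub>R v)"
        using sum.reindex_bij_betw[OF g, of "\<lambda>v. x$(inv_into UNIV g v) *\<^sub>R v"] g
        by (simp add: bij_betw_inv_into_left)
      ultimately have "(\<Sum>v\<in>s. x$(inv_into UNIV g v) *\<^sub>R v) = 0" by simp
      hence "\<forall>v\<in>s. x$(inv_into UNIV g v) = 0"
        using ind dependent_finite[OF fin] by auto
      hence "x$j = 0" for j using g
        by (metis UNIV_I bij_betw_apply bij_betw_inv_into_left)
      thus "x = 0" by (simp add: vec_eq_iff)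
    qed
  qed
  hence "det A \<noteq> 0" using det_nz_iff_inj[of "(*v) A"] by simp
  thus ?thesis using g unfolding A_def by blast
qed

definition ratof :: "real \<Rightarrow> rat" where "ratof x = (SOME q. of_rat q = x)"

lemma ratof: "x \<in> \<rat> \<Longrightarrow> of_rat (ratof x) = x"
  unfolding ratof_def by (metis (mono_tags, lifting) Rats_cases someI_ex)

lemma L1:
  fixes s :: "(real^'n) set"
  assumes ind: "independent s" and card: "card s = CARD('n)"
    and rat: "\<And>v i. v \<in> s \<Longrightarrow> v$i \<in> \<rat>" and brat: "\<And>i. b$i \<in> \<rat>"
  shows "\<exists>c::real^'n \<Rightarrow> rat. (\<Sum>v\<in>s. of_rat (c v) *\<^sub>R v) = b"
proof -
  obtain g where g: "bij_betw g UNIV s" and A: "det (\<chi> i j. g j $ i :: real^'n^'n) \<noteq> 0"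
    using basis_solve[OF ind card] by blast
  define A :: "real^'n^'n" where "A = (\<chi> i j. g j $ i)"
  have gs: "g j \<in> s" for j using g unfolding bij_betw_def by blast
  have Arat: "A$i$j \<in> \<rat>" for i j unfolding A_def using rat[OF gs] by simp
  obtain x where x: "A *v x = b" "\<forall>k. x$k \<in> \<rat>" using rat_solve[OF A[folded A_def] Arat brat] by blast
  define c where "c v = ratof (x $ inv_into UNIV g v)" for v
  have "A *v x = (\<Sum>j\<in>UNIV. x$j *\<^sub>R g j)"
    by (simp add: A_def matrix_vector_mult_def vec_eq_iff mult.commute)
  also have "\<dots> = (\<Sum>v\<in>s. x$(inv_into UNIV g v) *\<^sub>R v)"
    using sum.reindex_bij_betw[OF g, of "\<lambda>v. x$(inv_into UNIV g v) *\<^sub>R v"] g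
    by (simp add: bij_betw_inv_into_left)
  also have "\<dots> = (\<Sum>v\<in>s. of_rat (c v) *\<^sub>R v)"
    using x(2) by (intro sum.cong) (simp_all add: c_def ratof)
  finally have "(\<Sum>v\<in>s. of_rat (c v) *\<^sub>R v) = b" using x(1) by simp
  thus ?thesis by blast
qed

lemma L2:
  fixes s :: "(real^'n) set"
  assumes ind: "independent s" and card: "card s = CARD('n)"
    and rat: "\<And>v i. v \<in> s \<Longrightarrow> v$i \<in> \<rat>"
  shows "\<exists>u::'n \<Rightarrow> rat. \<forall>v\<in>s. of_rat (f v) = (\<Sum>i\<in>UNIV. of_rat (u i) * v$i)"
proof -
  obtain g where g: "bij_betw g UNIV s" and A: "det (\<chi> i j. g j $ i :: real^'n^'n) \<noteq> 0"
    using basis_solve[OF ind card] by blast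
  define A :: "real^'n^'n" where "A = (\<chi> i j. g j $ i)"
  have gs: "g j \<in> s" for j using g unfolding bij_betw_def by blast
  have Arat: "transpose A$i$j \<in> \<rat>" for i j unfolding A_def transpose_def using rat[OF gs] by simp
  define b :: "real^'n" where "b = (\<chi> j. of_rat (f (g j)))"
  have brat: "b$i \<in> \<rat>" for i by (simp add: b_def)
  have dT: "det (transpose A) \<noteq> 0" using A unfolding A_def det_transpose .
  obtain x where x: "transpose A *v x = b" "\<forall>k. x$k \<in> \<rat>"
    using rat_solve[OF dT Arat brat] by blast
  define u where "u i = ratof (x$i)" for i
  have "of_rat (f v) = (\<Sum>i\<in>UNIV. of_rat (u i) * v$i)" if v: "v \<in> s" for v
  proof -
    obtain j where j: "v = g j" using g v unfolding bij_betw_def by blast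
    have "of_rat (f v) = b$j" by (simp add: b_def j)
    also have "\<dots> = (transpose A *v x) $ j" using x(1) by simp
    also have "\<dots> = (\<Sum>i\<in>UNIV. g j $ i * x$i)"
      by (simp add: matrix_vector_mult_def transpose_def A_def)
    also have "\<dots> = (\<Sum>i\<in>UNIV. of_rat (u i) * v$i)"
      using x(2) by (intro sum.cong) (simp_all add: u_def ratof j)
    finally show ?thesis .
  qed
  thus ?thesis by blast
qed

lemma aff_unique:
  fixes s :: "'a::real_vector set"
  assumes "finite s" "\<not> affine_dependent s"
    and "sum a s = sum b s" "(\<Sum>v\<in>s. a v *\<^sub>R v) = (\<Sum>v\<in>s. b v *\<^sub>R v)" "v \<in> s"
  shows "a v = b v"
proof (rule ccontr)
  assume "a v \<noteq> b v"
  hence "sum (\<lambda>v. a v - b v) s = 0 \<and> (\<exists>v\<in>s. a v - b v \<noteq> 0) \<and> (\<Sum>v\<in>s. (a v - b v) *\<^sub>R v) = 0"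
    using assms by (auto simp: sum_subtractf scaleR_diff_left)
  thus False using assms(2) affine_dependent_explicit_finite[OF assms(1)] by blast
qed

locale psetup =
  fixes \<Delta> :: "(real ^ 'n::finite) set" and \<Lambda> :: "(real ^ 'n) set set"
  assumes refl: "reflexive_polytope \<Delta>"
    and decomp: "simplicial_decomp \<Lambda> (frontier \<Delta>)"
    and vert: "verts \<Lambda> = admissible_pts \<Delta>"
begin

abbreviation "V \<equiv> verts \<Lambda>"

lemma convD: "convex \<Delta>" and compD: "compact \<Delta>" and int0: "0 \<in> interior \<Delta>"
proof -
  obtain S where S: "finite S" "\<Delta> = convex hull S"
    using refl unfolding reflexive_polytope_def lattice_polytope_def by blast
  show "convex \<Delta>" using S by simp
  show "compact \<Delta>" using S by (simp add: compact_convex_hull finite_imp_compact)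
  show "0 \<in> interior \<Delta>" using refl unfolding reflexive_polytope_def by blast
qed

lemma closedD: "closed \<Delta>" using compD compact_imp_closed by blast
lemma boundedD: "bounded \<Delta>" using compD compact_imp_bounded by blast

lemmas D = decomp[unfolded simplicial_decomp_def]

lemma finL: "finite \<Lambda>" using D by (rule conjunct1)
lemma simpL: assumes "s \<in> \<Lambda>" shows "s \<noteq> {} \<and> finite s \<and> \<not> affine_dependent s"
proof -
  have "\<forall>s\<in>\<Lambda>. s \<noteq> {} \<and> finite s \<and> \<not> affine_dependent s" using D by (elim conjE)
  thus ?thesis using assms by (rule bspec)
qed
lemma faceL: assumes "s \<in> \<Lambda>" "t \<noteq> {}" "t \<subseteq> s" shows "t \<in> \<Lambda>"
proof -
  have "\<forall>s\<in>\<Lambda>. \<forall>t. t \<noteq> {} \<longrightarrow> t \<subseteq> s \<longrightarrow> t \<in> \<Lambda>" using D by (elim conjE)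
  thus ?thesis using assms by simp
qed
lemma interL: assumes "s \<in> \<Lambda>" "t \<in> \<Lambda>" shows "convex hull s \<inter> convex hull t = convex hull (s \<inter> t)"
proof -
  have "\<forall>s\<in>\<Lambda>. \<forall>t\<in>\<Lambda>. convex hull s \<inter> convex hull t = convex hull (s \<inter> t)" using D by (elim conjE)
  thus ?thesis using assms by simp
qed
lemma coverL: "\<Union>((\<lambda>s. convex hull s) ` \<Lambda>) = frontier \<Delta>"
  using D by (elim conjE)

lemma hull_front: assumes "s \<in> \<Lambda>" shows "convex hull s \<subseteq> frontier \<Delta>"
proof -
  have "convex hull s \<subseteq> \<Union>((\<lambda>s. convex hull s) ` \<Lambda>)" using assms by (rule UN_upper)
  thus ?thesis by (simp only: coverL)
qed

lemma finV: "finite V"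
  unfolding verts_def by (rule finite_Union[OF finL]) (simp add: simpL)

lemma V_front: assumes "v \<in> V" shows "v \<in> frontier \<Delta>"
proof -
  obtain s where "s \<in> \<Lambda>" "v \<in> s" using assms unfolding verts_def by blast
  thus ?thesis using hull_front[of s] hull_inc[of v s] by blast
qed

lemma V_int: assumes "v \<in> V" shows "v$i \<in> \<int>"
proof -
  have "v \<in> admissible_pts \<Delta>" using vert assms by simp
  thus ?thesis unfolding admissible_pts_def lattice_pts_def by simp
qed

lemma V_rat: "v \<in> V \<Longrightarrow> v$i \<in> \<rat>"
  using V_int Ints_subset_Rats by blast

lemma front_sub: "frontier \<Delta> \<subseteq> \<Delta>"
  using closedD by (simp add: frontier_subset_closed)

lemma front_nz: "x \<in> frontier \<Delta> \<Longrightarrow> x \<noteq> 0"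
  using int0 unfolding frontier_def by auto

lemma shrink_int:
  assumes "x \<in> \<Delta>" "0 \<le> t" "t < 1" shows "t *\<^sub>R x \<in> interior \<Delta>"
proof -
  have "x - (1 - t) *\<^sub>R (x - 0) \<in> interior \<Delta>"
    by (rule mem_interior_convex_shrink[OF convD int0]) (use assms in auto)
  moreover have "x - (1 - t) *\<^sub>R (x - 0) = t *\<^sub>R x" by (simp add: algebra_simps)
  ultimately show ?thesis by simp
qed

lemma ray_unique:
  assumes "0 < t1" "0 < t2" "t1 *\<^sub>R x \<in> frontier \<Delta>" "t2 *\<^sub>R x \<in> frontier \<Delta>"
  shows "t1 = t2"
proof -
  have *: False if "0 < a" "a < b" "a *\<^sub>R x \<in> frontier \<Delta>" "b *\<^sub>R x \<in> frontier \<Delta>" for a b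
  proof -
    have "(a / b) *\<^sub>R (b *\<^sub>R x) \<in> interior \<Delta>"
      using that front_sub by (intro shrink_int) auto
    hence "a *\<^sub>R x \<in> interior \<Delta>" using that by simp
    thus False using that unfolding frontier_def by blast
  qed
  show ?thesis
  proof (rule ccontr)
    assume "t1 \<noteq> t2"
    then consider "t1 < t2" | "t2 < t1" by linarith
    thus False using *[of t1 t2] *[of t2 t1] assms by cases blast+
  qed
qed

lemma ray_exists:
  assumes "x \<noteq> 0" shows "\<exists>t>0. t *\<^sub>R x \<in> frontier \<Delta>"
proof -
  obtain d where "0 < d" "0 + d *\<^sub>R x \<in> frontier \<Delta>"
    using ray_to_frontier[OF boundedD int0 assms] by blast
  thus ?thesis by auto
qed

lemma indepL:
  assumes s: "s \<in> \<Lambda>" shows "independent s"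
proof
  assume dep: "dependent s"
  have fin: "finite s" and ne: "s \<noteq> {}" and ai: "\<not> affine_dependent s" using simpL[OF s] by auto
  obtain u where u: "\<exists>v\<in>s. u v \<noteq> 0" "(\<Sum>v\<in>s. u v *\<^sub>R v) = 0"
    using dep dependent_finite[OF fin] by auto
  have su: "sum u s \<noteq> 0"
    using u ai affine_dependent_explicit_finite[OF fin] by blast
  define a where "a v = u v / sum u s" for v
  have sa: "sum a s = 1" using su by (simp add: a_def sum_divide_distrib[symmetric])
  have "(\<Sum>v\<in>s. a v *\<^sub>R v) = (1 / sum u s) *\<^sub>R (\<Sum>v\<in>s. u v *\<^sub>R v)"
    by (simp add: a_def scaleR_sum_right)
  hence a0: "(\<Sum>v\<in>s. a v *\<^sub>R v) = 0" using u(2) by simp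
  define k where "k = real (card s)"
  have kpos: "k > 0" using fin ne by (simp add: k_def card_gt_0_iff)
  define M where "M = 1 + (\<Sum>v\<in>s. \<bar>a v\<bar>)"
  have Mpos: "M \<ge> 1" unfolding M_def by (simp add: sum_nonneg)
  define e where "e = 1 / (k * M)"
  have epos: "e > 0" using kpos Mpos by (simp add: e_def)
  define w where "w v = (1 + e) / k - e * a v" for v
  define b where "b = (\<Sum>v\<in>s. (1 / k) *\<^sub>R v)"
  have aM: "\<bar>a v\<bar> \<le> M" if "v \<in> s" for v
  proof -
    have "\<bar>a v\<bar> \<le> (\<Sum>v\<in>s. \<bar>a v\<bar>)" using fin that by (intro member_le_sum) auto
    thus ?thesis unfolding M_def by simp
  qed
  have w0: "w v \<ge> 0" if "v \<in> s" for v
  proof -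
    have "e * a v \<le> e * \<bar>a v\<bar>" using epos by (simp add: mult_left_mono)
    also have "\<dots> \<le> e * M" using aM[OF that] epos by (simp add: mult_left_mono)
    also have "\<dots> = 1 / k" using kpos Mpos by (simp add: e_def)
    also have "\<dots> \<le> (1 + e) / k" using kpos epos by (simp add: divide_right_mono)
    finally show ?thesis unfolding w_def by simp
  qed
  have "sum w s = (\<Sum>v\<in>s. (1+e)/k) - e * sum a s"
    by (simp add: w_def sum_subtractf sum_distrib_left)
  also have "\<dots> = 1" using sa kpos by (simp add: k_def)
  finally have sw: "sum w s = 1" .
  have wb: "(\<Sum>v\<in>s. w v *\<^sub>R v) = (1 + e) *\<^sub>R b"
  proof -
    have "(\<Sum>v\<in>s. w v *\<^sub>R v) = (\<Sum>v\<in>s. ((1 + e) / k) *\<^sub>R v) - e *\<^sub>R (\<Sum>v\<in>s. a v *\<^sub>R v)"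
      by (simp add: w_def scaleR_diff_left sum_subtractf scaleR_sum_right)
    also have "\<dots> = (1 + e) *\<^sub>R b" using a0 by (simp add: b_def scaleR_sum_right)
    finally show ?thesis .
  qed
  have "(1 + e) *\<^sub>R b \<in> convex hull s"
    unfolding convex_hull_finite[OF fin] using w0 sw wb by blast
  moreover have "b \<in> convex hull s"
    unfolding convex_hull_finite[OF fin] b_def
    using kpos by (intro CollectI exI[of _ "\<lambda>v. 1/k"]) (simp add: k_def)
  ultimately have "(1 + e) *\<^sub>R b \<in> frontier \<Delta>" "1 *\<^sub>R b \<in> frontier \<Delta>"
    using hull_front[OF s] by auto
  hence "1 + e = 1" using ray_unique[of "1+e" 1 b] epos by simp
  thus False using epos by simp
qed

lemma cardL: "s \<in> \<Lambda> \<Longrightarrow> card s \<le> CARD('n)"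
  using independent_bound[OF indepL] by simp

lemma top_exists: "\<exists>s\<in>\<Lambda>. card s = CARD('n)"
proof (rule ccontr)
  assume "\<not> ?thesis"
  hence ne: "card s \<noteq> CARD('n)" if "s \<in> \<Lambda>" for s using that by blast
  have lt: "card s < CARD('n)" if "s \<in> \<Lambda>" for s
    using cardL[OF that] ne[OF that] by linarith
  have "UNIV - {0} \<subseteq> \<Union>(span ` \<Lambda>)"
  proof
    fix x :: "real^'n" assume "x \<in> UNIV - {0}"
    hence "x \<noteq> 0" by simp
    then obtain t where t: "t > 0" "t *\<^sub>R x \<in> frontier \<Delta>" using ray_exists by blast
    then obtain s where s: "s \<in> \<Lambda>" "t *\<^sub>R x \<in> convex hull s" using coverL by blast
    hence "t *\<^sub>R x \<in> span s" using convex_hull_subset_span by blast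
    hence "(1/t) *\<^sub>R (t *\<^sub>R x) \<in> span s" by (rule span_mul)
    moreover have "(1/t) *\<^sub>R (t *\<^sub>R x) = x" using t(1) by simp
    ultimately show "x \<in> \<Union>(span ` \<Lambda>)" using s by auto
  qed
  hence sub: "UNIV \<subseteq> {0} \<union> \<Union>(span ` \<Lambda>)" by blast
  have "negligible (span s)" if "s \<in> \<Lambda>" for s
  proof (rule negligible_lowdim)
    have "dim (span s) = card s" using dim_eq_card_independent[OF indepL[OF that]] by simp
    thus "dim (span s) < DIM(real^'n)" using lt[OF that] by simp
  qed
  hence "negligible (\<Union>(span ` \<Lambda>))" using finL by (intro negligible_Union) auto
  hence "negligible ({0} \<union> \<Union>(span ` \<Lambda>))" by (intro negligible_Un negligible_sing)
  hence "negligible (UNIV :: (real^'n) set)" using negligible_subset[OF _ sub] by blast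
  thus False using open_not_negligible[of "UNIV :: (real^'n) set"] by simp
qed

end

lemma lin_unique:
  fixes s :: "(real^'n) set"
  assumes "independent s" "finite s"
    and "(\<Sum>v\<in>s. a v *\<^sub>R v) = (\<Sum>v\<in>s. b v *\<^sub>R v)" "v \<in> s"
  shows "a v = b v"
proof (rule ccontr)
  assume "a v \<noteq> b v"
  hence 1: "\<exists>v\<in>s. a v - b v \<noteq> 0" using assms(4) by auto
  have "(\<Sum>v\<in>s. (a v - b v) *\<^sub>R v) = (\<Sum>v\<in>s. a v *\<^sub>R v) - (\<Sum>v\<in>s. b v *\<^sub>R v)"
    by (simp add: scaleR_diff_left sum_subtractf)
  also have "\<dots> = 0" by (simp only: assms(3) diff_self)
  finally have 2: "(\<Sum>v\<in>s. (a v - b v) *\<^sub>R v) = 0" .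
  have "dependent s" unfolding dependent_finite[OF assms(2)]
    by (rule exI[of _ "\<lambda>v. a v - b v"]) (use 1 2 in simp)
  thus False using assms(1) by blast
qed

lemma betastar_inner:
  assumes "r \<in> betastar V"
  shows "\<exists>U::real^'n::finite. \<forall>v\<in>V. of_rat (r v) = U \<bullet> v"
proof -
  obtain u :: "'n \<Rightarrow> rat" where u: "\<forall>v\<in>V. real_of_rat (r v) = (\<Sum>i\<in>UNIV. real_of_rat (u i) * v $ i)"
    using assms unfolding betastar_def by blast
  define U :: "real^'n" where "U = (\<chi> i. of_rat (u i))"
  have "\<forall>v\<in>V. of_rat (r v) = U \<bullet> v" using u by (simp add: U_def inner_vec_def)
  thus ?thesis by blast
qed

lemma betastar_Nsp:
  assumes "finite V" "b \<in> betastar V" "m \<in> Nsp V"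
  shows "dpair V b m = 0"
proof -
  obtain U where U: "\<forall>v\<in>V. of_rat (b v) = U \<bullet> v" using betastar_inner[OF assms(2)] by blast
  have m0: "(\<Sum>v\<in>V. real_of_rat (m v) *\<^sub>R v) = 0" using assms(3) unfolding Nsp_def by blast
  have "of_rat (dpair V b m) = (\<Sum>v\<in>V. (U \<bullet> v) * of_rat (m v))"
    unfolding dpair_def of_rat_sum of_rat_mult using U by (intro sum.cong) auto
  also have "\<dots> = U \<bullet> (\<Sum>v\<in>V. real_of_rat (m v) *\<^sub>R v)"
    by (simp add: inner_sum_right mult.commute)
  also have "\<dots> = 0" using m0 by simp
  finally show ?thesis by simp
qed

context psetup
begin

definition "SP d s \<longleftrightarrow> s \<in> \<Lambda> \<and> (\<exists>c. (\<forall>v\<in>s. c v > 0) \<and> - d = (\<Sum>v\<in>s. c v *\<^sub>R v))"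

lemma V_nz: "d \<in> V \<Longrightarrow> d \<noteq> 0" using V_front front_nz by blast

lemma sperp_ex:
  assumes d: "d \<in> V" shows "\<exists>s. SP d s"
proof -
  have "- d \<noteq> 0" using V_nz[OF d] by simp
  then obtain t where t: "t > 0" "t *\<^sub>R (- d) \<in> frontier \<Delta>" using ray_exists by blast
  hence "t *\<^sub>R (- d) \<in> \<Union>((\<lambda>s. convex hull s) ` \<Lambda>)" by (simp only: coverL)
  then obtain s where s: "s \<in> \<Lambda>" "t *\<^sub>R (- d) \<in> convex hull s" by blast
  have fin: "finite s" using simpL[OF s(1)] by blast
  obtain w where w: "\<forall>x\<in>s. 0 \<le> w x" "sum w s = 1" "(\<Sum>x\<in>s. w x *\<^sub>R x) = t *\<^sub>R (- d)"
    using s(2) unfolding convex_hull_finite[OF fin] by blast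
  define s' where "s' = {v\<in>s. 0 < w v}"
  have sub: "s' \<subseteq> s" unfolding s'_def by blast
  have ne: "s' \<noteq> {}"
  proof
    assume "s' = {}"
    hence "\<forall>x\<in>s. w x = 0" using w(1) unfolding s'_def by force
    hence "sum w s = 0" by simp
    thus False using w(2) by simp
  qed
  have s'L: "s' \<in> \<Lambda>" using faceL[OF s(1) ne sub] .
  have "(\<Sum>x\<in>s'. w x *\<^sub>R x) = (\<Sum>x\<in>s. w x *\<^sub>R x)"
  proof (rule sum.mono_neutral_left[OF fin sub])
    show "\<forall>i\<in>s - s'. w i *\<^sub>R i = 0" using w(1) unfolding s'_def by force
  qed
  hence "(1/t) *\<^sub>R (\<Sum>x\<in>s'. w x *\<^sub>R x) = (1/t) *\<^sub>R (t *\<^sub>R (- d))"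
    using w(3) by simp
  hence "(\<Sum>x\<in>s'. (w x / t) *\<^sub>R x) = (1/t) *\<^sub>R (t *\<^sub>R (- d))"
    by (simp add: scaleR_sum_right divide_inverse_commute)
  also have "\<dots> = - d" using t(1) by simp
  finally have "- d = (\<Sum>x\<in>s'. (w x / t) *\<^sub>R x)" by simp
  moreover have "\<forall>v\<in>s'. w v / t > 0" using t(1) unfolding s'_def by auto
  ultimately have "SP d s'" unfolding SP_def
    by (intro conjI[OF s'L] exI[of _ "\<lambda>x. w x / t"]) simp
  thus ?thesis by blast
qed

lemma SP_hull:
  assumes "SP d s"
  obtains T where "T > 0" "(1/T) *\<^sub>R (- d) \<in> convex hull s"
    "\<exists>c. (\<forall>v\<in>s. c v > 0) \<and> sum c s = T \<and> - d = (\<Sum>v\<in>s. c v *\<^sub>R v)"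
proof -
  obtain c where c: "\<forall>v\<in>s. c v > 0" "- d = (\<Sum>v\<in>s. c v *\<^sub>R v)" and sL: "s \<in> \<Lambda>"
    using assms unfolding SP_def by blast
  have fin: "finite s" and ne: "s \<noteq> {}" using simpL[OF sL] by auto
  define T where "T = sum c s"
  have Tp: "T > 0" unfolding T_def using c(1) fin ne by (intro sum_pos) auto
  have "(\<Sum>v\<in>s. (c v / T) *\<^sub>R v) = (1/T) *\<^sub>R (\<Sum>v\<in>s. c v *\<^sub>R v)"
    by (simp add: scaleR_sum_right divide_inverse_commute)
  hence h3: "(\<Sum>v\<in>s. (c v / T) *\<^sub>R v) = (1/T) *\<^sub>R (- d)" using c(2) by simp
  have h2: "sum (\<lambda>v. c v / T) s = 1" using Tp by (simp add: T_def sum_divide_distrib[symmetric])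
  have h1: "\<forall>v\<in>s. 0 \<le> c v / T" using c(1) Tp by (auto intro!: divide_nonneg_pos less_imp_le)
  have "(1/T) *\<^sub>R (- d) \<in> convex hull s"
    unfolding convex_hull_finite[OF fin] mem_Collect_eq
    by (intro exI[of _ "\<lambda>v. c v / T"] conjI) (fact h1 h2 h3)+
  moreover have "\<exists>c. (\<forall>v\<in>s. c v > 0) \<and> sum c s = T \<and> - d = (\<Sum>v\<in>s. c v *\<^sub>R v)"
    using c by (intro exI[of _ c]) (simp add: T_def)
  ultimately show ?thesis using that Tp by blast
qed

lemma sperp_sub:
  assumes d: "d \<in> V" and s1: "SP d s1" and s2: "SP d s2"
  shows "s1 \<subseteq> s2"
proof
  fix v0 assume v0: "v0 \<in> s1"
  obtain T1 where T1: "T1 > 0" "(1/T1) *\<^sub>R (- d) \<in> convex hull s1"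
     "\<exists>c. (\<forall>v\<in>s1. c v > 0) \<and> sum c s1 = T1 \<and> - d = (\<Sum>v\<in>s1. c v *\<^sub>R v)"
    using SP_hull[OF s1] by blast
  obtain T2 where T2: "T2 > 0" "(1/T2) *\<^sub>R (- d) \<in> convex hull s2"
    using SP_hull[OF s2] by blast
  obtain c where c: "\<forall>v\<in>s1. c v > 0" "sum c s1 = T1" "- d = (\<Sum>v\<in>s1. c v *\<^sub>R v)"
    using T1(3) by blast
  have L1: "s1 \<in> \<Lambda>" and L2: "s2 \<in> \<Lambda>" using s1 s2 unfolding SP_def by auto
  have f1: "(1/T1) *\<^sub>R (- d) \<in> frontier \<Delta>" using hull_front[OF L1] T1(2) by blast
  have f2: "(1/T2) *\<^sub>R (- d) \<in> frontier \<Delta>" using hull_front[OF L2] T2(2) by blast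
  have "1/T1 = 1/T2"
    by (rule ray_unique[OF _ _ f1 f2]) (use T1(1) T2(1) in auto)
  hence "(1/T1) *\<^sub>R (- d) \<in> convex hull s1 \<inter> convex hull s2" using T1(2) T2(2) by simp
  hence x12: "(1/T1) *\<^sub>R (- d) \<in> convex hull (s1 \<inter> s2)" using interL[OF L1 L2] by simp
  have fin1: "finite s1" and ai: "\<not> affine_dependent s1" using simpL[OF L1] by auto
  have fin12: "finite (s1 \<inter> s2)" using fin1 by simp
  obtain w where w: "\<forall>x\<in>s1 \<inter> s2. 0 \<le> w x" "sum w (s1 \<inter> s2) = 1"
     "(\<Sum>x\<in>s1 \<inter> s2. w x *\<^sub>R x) = (1/T1) *\<^sub>R (- d)"
    using x12 unfolding convex_hull_finite[OF fin12] by blast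
  define a where "a v = c v / T1" for v
  define b where "b v = (if v \<in> s2 then w v else 0)" for v
  have e12: "s1 \<inter> s2 = {v\<in>s1. v \<in> s2}" by blast
  have "sum a s1 = 1" using T1(1) c(2) by (simp add: a_def sum_divide_distrib[symmetric])
  moreover have "sum b s1 = 1"
    using w(2) unfolding b_def e12 sum.inter_filter[OF fin1] by simp
  moreover have "(\<Sum>v\<in>s1. a v *\<^sub>R v) = (1/T1) *\<^sub>R (- d)"
    using c(3) by (simp add: a_def scaleR_sum_right divide_inverse_commute)
  moreover have "(\<Sum>v\<in>s1. b v *\<^sub>R v) = (1/T1) *\<^sub>R (- d)"
  proof -
    have "(\<Sum>v\<in>s1. b v *\<^sub>R v) = (\<Sum>v\<in>s1. if v \<in> s2 then w v *\<^sub>R v else 0)"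
      by (intro sum.cong) (auto simp: b_def)
    also have "\<dots> = (\<Sum>x\<in>s1 \<inter> s2. w x *\<^sub>R x)"
      unfolding e12 sum.inter_filter[OF fin1] ..
    finally show ?thesis using w(3) by simp
  qed
  ultimately have "a v0 = b v0" using aff_unique[OF fin1 ai _ _ v0, of a b] by simp
  moreover have "a v0 > 0" using c(1) v0 T1(1) by (simp add: a_def)
  ultimately show "v0 \<in> s2" unfolding b_def by (cases "v0 \<in> s2") auto
qed

lemma sperp_prop:
  assumes d: "d \<in> V"
  shows "sperp \<Lambda> d \<in> \<Lambda> \<and> (\<exists>c. (\<forall>v\<in>sperp \<Lambda> d. c v > 0) \<and> - d = (\<Sum>v\<in>sperp \<Lambda> d. c v *\<^sub>R v))"
proof -
  obtain s0 where s0: "SP d s0" using sperp_ex[OF d] by blast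
  have "\<exists>!s. SP d s"
  proof (rule ex1I[of _ s0])
    show "SP d s0" by (rule s0)
    fix s assume "SP d s"
    thus "s = s0" using sperp_sub[OF d] s0 by (intro subset_antisym) auto
  qed
  hence "SP d (THE s. SP d s)" by (rule theI')
  moreover have "sperp \<Lambda> d = (THE s. SP d s)" unfolding sperp_def SP_def ..
  ultimately show ?thesis unfolding SP_def by simp
qed

end

lemma sum_supp:
  assumes "finite V" "A \<subseteq> V" "\<forall>v\<in>V - A. f v = 0"
  shows "sum f V = sum f A"
  using sum.mono_neutral_right[OF assms] .

context psetup
begin

lemma topD: assumes "s \<in> top_simplices \<Lambda>" shows "s \<in> \<Lambda>" "card s = CARD('n)"
  using assms unfolding top_simplices_def by auto

lemma top_indep: "s \<in> top_simplices \<Lambda> \<Longrightarrow> independent s"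
  using topD indepL by blast

lemma top_fin: "s \<in> top_simplices \<Lambda> \<Longrightarrow> finite s"
  using topD simpL by blast

lemma L_subV: "s \<in> \<Lambda> \<Longrightarrow> s \<subseteq> V"
  unfolding verts_def by blast

lemma top_subV: "s \<in> top_simplices \<Lambda> \<Longrightarrow> s \<subseteq> V"
  using topD L_subV by blast

lemma top_rat: "s \<in> top_simplices \<Lambda> \<Longrightarrow> v \<in> s \<Longrightarrow> v$i \<in> \<rat>"
  using top_subV V_rat by blast

lemma nvec_prop:
  assumes s: "s \<in> top_simplices \<Lambda>" and d: "d \<in> V" "d \<notin> s"
  shows "nvec s d d = 1 \<and> (\<forall>v. v \<notin> insert d s \<longrightarrow> nvec s d v = 0) \<and>
         (\<Sum>v\<in>insert d s. real_of_rat (nvec s d v) *\<^sub>R v) = 0"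
proof -
  define Q where "Q c \<longleftrightarrow> c d = 1 \<and> (\<forall>v. v \<notin> insert d s \<longrightarrow> c v = 0) \<and>
         (\<Sum>v\<in>insert d s. real_of_rat (c v) *\<^sub>R v) = 0" for c :: "real^'n \<Rightarrow> rat"
  have fin: "finite s" using top_fin[OF s] .
  have ind: "independent s" using top_indep[OF s] .
  have split: "(\<Sum>v\<in>insert d s. real_of_rat (c v) *\<^sub>R v) = real_of_rat (c d) *\<^sub>R d + (\<Sum>v\<in>s. real_of_rat (c v) *\<^sub>R v)"
    for c :: "real^'n \<Rightarrow> rat" using fin d(2) by (rule sum.insert)
  have brat: "(- d)$i \<in> \<rat>" for i using V_rat[OF d(1), of i] by simp
  obtain c where c: "(\<Sum>v\<in>s. of_rat (c v) *\<^sub>R v) = - d"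
    using L1[OF ind topD(2)[OF s] top_rat[OF s] brat] by blast
  define c' where "c' v = (if v = d then 1 else if v \<in> s then c v else 0)" for v
  have "(\<Sum>v\<in>s. of_rat (c' v) *\<^sub>R v) = (\<Sum>v\<in>s. of_rat (c v) *\<^sub>R v)"
    using d(2) by (intro sum.cong) (auto simp: c'_def)
  hence "(\<Sum>v\<in>insert d s. real_of_rat (c' v) *\<^sub>R v) = d + - d"
    unfolding split using c by (simp add: c'_def)
  hence "Q c'" unfolding Q_def by (simp add: c'_def)
  moreover have "c1 = c2" if "Q c1" "Q c2" for c1 c2
  proof
    fix v
    have s1: "(\<Sum>v\<in>s. of_rat (c1 v) *\<^sub>R v) = - d" using that(1) unfolding Q_def split
      by (simp add: add_eq_0_iff)
    have s2: "(\<Sum>v\<in>s. of_rat (c2 v) *\<^sub>R v) = - d" using that(2) unfolding Q_def split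
      by (simp add: add_eq_0_iff)
    show "c1 v = c2 v"
    proof (cases "v \<in> s")
      case True
      have "real_of_rat (c1 v) = real_of_rat (c2 v)"
        using lin_unique[OF ind fin _ True, of "\<lambda>v. real_of_rat (c1 v)" "\<lambda>v. real_of_rat (c2 v)"] s1 s2
        by simp
      thus ?thesis by simp
    next
      case False
      thus ?thesis using that unfolding Q_def by (cases "v = d") auto
    qed
  qed
  ultimately have "\<exists>!c. Q c" by blast
  hence "Q (THE c. Q c)" by (rule theI')
  moreover have "nvec s d = (THE c. Q c)" unfolding nvec_def Q_def ..
  ultimately show ?thesis unfolding Q_def by simp
qed

lemma span_top: assumes s: "s \<in> top_simplices \<Lambda>" shows "span s = UNIV"
proof -
  have "dim (UNIV :: (real^'n) set) = CARD('n)" by simp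
  hence "UNIV \<subseteq> span s"
    using card_eq_dim[of s UNIV] top_indep[OF s] topD(2)[OF s] top_fin[OF s] by simp
  thus ?thesis by blast
qed

lemma betastar_unique:
  assumes s: "s \<in> top_simplices \<Lambda>" and r1: "r1 \<in> betastar V" and r2: "r2 \<in> betastar V"
    and eq: "\<forall>d\<in>s. r1 d = r2 d"
  shows "r1 = r2"
proof
  fix v
  obtain U1 where U1: "\<forall>v\<in>V. of_rat (r1 v) = U1 \<bullet> v" using betastar_inner[OF r1] by blast
  obtain U2 where U2: "\<forall>v\<in>V. of_rat (r2 v) = U2 \<bullet> v" using betastar_inner[OF r2] by blast
  define W where "W = U1 - U2"
  have "orthogonal W y" if "y \<in> s" for y
  proof -
    have "y \<in> V" using that top_subV[OF s] by blast
    hence "U1 \<bullet> y = U2 \<bullet> y" using U1 U2 eq that by metis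
    thus ?thesis unfolding orthogonal_def W_def by (simp add: inner_diff_left)
  qed
  hence "orthogonal W W" using span_top[OF s] by (intro orthogonal_to_span[of W s W]) auto
  hence W0: "W = 0" unfolding orthogonal_def by simp
  show "r1 v = r2 v"
  proof (cases "v \<in> V")
    case True
    hence "of_rat (r1 v) = (of_rat (r2 v) :: real)" using U1 U2 W0 unfolding W_def by simp
    thus ?thesis by simp
  next
    case False
    thus ?thesis using r1 r2 unfolding betastar_def Ddag_def by auto
  qed
qed

lemma rho_prop:
  assumes s: "s \<in> top_simplices \<Lambda>"
  shows "rho_prime \<Lambda> r s \<in> betastar V \<and> (\<forall>d\<in>s. rho_prime \<Lambda> r s d = r d)"
proof -
  define Q where "Q r' \<longleftrightarrow> r' \<in> betastar V \<and> (\<forall>d\<in>s. r' d = r d)" for r'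
  obtain u :: "'n \<Rightarrow> rat" where u: "\<forall>v\<in>s. of_rat (r v) = (\<Sum>i\<in>UNIV. of_rat (u i) * v$i)"
    using L2[OF top_indep[OF s] topD(2)[OF s] top_rat[OF s]] by blast
  define r' where "r' v = (if v \<in> V then ratof (\<Sum>i\<in>UNIV. of_rat (u i) * v$i) else 0)" for v
  have rat: "(\<Sum>i\<in>UNIV. of_rat (u i) * v$i) \<in> \<rat>" if "v \<in> V" for v
    using V_rat[OF that] by (intro Rats_sum Rats_mult) auto
  have r'V: "of_rat (r' v) = (\<Sum>i\<in>UNIV. of_rat (u i) * v$i)" if "v \<in> V" for v
    using that rat[OF that] by (simp add: r'_def ratof)
  have "r' \<in> betastar V" unfolding betastar_def Ddag_def
    using r'V by (auto simp: r'_def)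
  moreover have "\<forall>d\<in>s. r' d = r d"
  proof
    fix d assume "d \<in> s"
    hence "of_rat (r' d) = (of_rat (r d) :: real)" using r'V u top_subV[OF s] by auto
    thus "r' d = r d" by simp
  qed
  ultimately have "Q r'" unfolding Q_def by blast
  moreover have "r1 = r2" if "Q r1" "Q r2" for r1 r2
    using betastar_unique[OF s] that unfolding Q_def by auto
  ultimately have "\<exists>!r'. Q r'" by blast
  hence "Q (THE r'. Q r')" by (rule theI')
  moreover have "rho_prime \<Lambda> r s = (THE r'. Q r')" unfolding rho_prime_def Q_def ..
  ultimately show ?thesis unfolding Q_def by simp
qed

lemma nvec_Nsp:
  assumes s: "s \<in> top_simplices \<Lambda>" and d: "d \<in> V" "d \<notin> s"
  shows "nvec s d \<in> Nsp V"
proof -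
  note N = nvec_prop[OF s d]
  have sub: "insert d s \<subseteq> V" using d top_subV[OF s] by blast
  have "nvec s d \<in> Ddag V" unfolding Ddag_def using N sub by blast
  moreover have "(\<Sum>v\<in>V. real_of_rat (nvec s d v) *\<^sub>R v) = (\<Sum>v\<in>insert d s. real_of_rat (nvec s d v) *\<^sub>R v)"
    by (rule sum_supp[OF finV sub]) (use N in auto)
  ultimately show ?thesis unfolding Nsp_def using N by simp
qed

lemma dpair_split:
  assumes s: "s \<in> top_simplices \<Lambda>" and d: "d \<in> V" "d \<notin> s"
  shows "dpair V x (nvec s d) = x d + (\<Sum>v\<in>s. x v * nvec s d v)"
proof -
  note N = nvec_prop[OF s d]
  have sub: "insert d s \<subseteq> V" using d top_subV[OF s] by blast
  have "dpair V x (nvec s d) = (\<Sum>v\<in>insert d s. x v * nvec s d v)"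
    unfolding dpair_def by (rule sum_supp[OF finV sub]) (use N in auto)
  also have "\<dots> = x d * nvec s d d + (\<Sum>v\<in>s. x v * nvec s d v)"
    using top_fin[OF s] d(2) by (rule sum.insert)
  finally show ?thesis using N by simp
qed

lemma Kid:
  assumes s: "s \<in> top_simplices \<Lambda>" and d: "d \<in> V" "d \<notin> s"
  shows "dpair V r (nvec s d) = r d - rho_prime \<Lambda> r s d"
proof -
  note R = rho_prop[OF s, of r]
  have "dpair V (rho_prime \<Lambda> r s) (nvec s d) = 0"
    using betastar_Nsp[OF finV _ nvec_Nsp[OF s d]] R by blast
  hence "rho_prime \<Lambda> r s d + (\<Sum>v\<in>s. rho_prime \<Lambda> r s v * nvec s d v) = 0"
    using dpair_split[OF s d] by simp
  moreover have "(\<Sum>v\<in>s. rho_prime \<Lambda> r s v * nvec s d v) = (\<Sum>v\<in>s. r v * nvec s d v)"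
    using R by (intro sum.cong) auto
  ultimately show ?thesis using dpair_split[OF s d, of r] by (simp add: eq_diff_eq)
qed

end

lemma Nsp_sum:
  assumes P: "finite P" and M: "\<forall>p\<in>P. M p \<in> Nsp V"
  shows "(\<lambda>x. \<Sum>p\<in>P. a p * M p x) \<in> Nsp V"
proof -
  have "(\<lambda>x. \<Sum>p\<in>P. a p * M p x) \<in> Ddag V"
    using M unfolding Nsp_def Ddag_def by auto
  moreover have "(\<Sum>v\<in>V. real_of_rat (\<Sum>p\<in>P. a p * M p v) *\<^sub>R v) = 0"
  proof -
    have "(\<Sum>v\<in>V. real_of_rat (\<Sum>p\<in>P. a p * M p v) *\<^sub>R v)
        = (\<Sum>v\<in>V. \<Sum>p\<in>P. real_of_rat (a p) *\<^sub>R (real_of_rat (M p v) *\<^sub>R v))"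
      by (simp add: of_rat_sum of_rat_mult scaleR_sum_left)
    also have "\<dots> = (\<Sum>p\<in>P. \<Sum>v\<in>V. real_of_rat (a p) *\<^sub>R (real_of_rat (M p v) *\<^sub>R v))"
      by (rule sum.swap)
    also have "\<dots> = (\<Sum>p\<in>P. real_of_rat (a p) *\<^sub>R (\<Sum>v\<in>V. real_of_rat (M p v) *\<^sub>R v))"
      by (simp add: scaleR_sum_right)
    also have "\<dots> = 0" using M unfolding Nsp_def by simp
    finally show ?thesis .
  qed
  ultimately show ?thesis unfolding Nsp_def by blast
qed

lemma Nsp_lin:
  assumes "m \<in> Nsp V" "m' \<in> Nsp V"
  shows "(\<lambda>x. a * m x + b * m' x) \<in> Nsp V"
proof -
  have "(\<lambda>x. \<Sum>p\<in>{True, False}. (if p then a else b) * (if p then m else m') x) \<in> Nsp V"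
    using assms by (intro Nsp_sum) auto
  thus ?thesis by simp
qed

lemma Nsp_zero: "(\<lambda>x. 0) \<in> Nsp V"
  unfolding Nsp_def Ddag_def by simp

lemma Ndag_zero:
  assumes f: "f \<in> Ndag V" shows "f (\<lambda>x. 0) = 0"
proof -
  have "f (\<lambda>x. 0 * (\<lambda>x. 0) x + 0 * (\<lambda>x. 0) x) = 0 * f (\<lambda>x. 0) + 0 * f (\<lambda>x. 0)"
    using f Nsp_zero unfolding Ndag_def by blast
  thus ?thesis by simp
qed

lemma Ndag_sum:
  assumes f: "f \<in> Ndag V" and P: "finite P" and M: "\<forall>p\<in>P. M p \<in> Nsp V"
  shows "f (\<lambda>x. \<Sum>p\<in>P. a p * M p x) = (\<Sum>p\<in>P. a p * f (M p))"
  using P M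
proof (induction P rule: finite_induct)
  case empty
  then show ?case using Ndag_zero[OF f] by simp
next
  case (insert q P)
  have S: "(\<lambda>x. \<Sum>p\<in>P. a p * M p x) \<in> Nsp V" using insert by (intro Nsp_sum) auto
  have Mq: "M q \<in> Nsp V" using insert by simp
  have eq: "(\<lambda>x. \<Sum>p\<in>insert q P. a p * M p x) = (\<lambda>x. a q * M q x + 1 * (\<lambda>x. \<Sum>p\<in>P. a p * M p x) x)"
    using insert by simp
  have "f (\<lambda>x. \<Sum>p\<in>insert q P. a p * M p x) = a q * f (M q) + 1 * f (\<lambda>x. \<Sum>p\<in>P. a p * M p x)"
    unfolding eq using f Mq S unfolding Ndag_def by blast
  also have "\<dots> = (\<Sum>p\<in>insert q P. a p * f (M p))" using insert by simp
  finally show ?case .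
qed

lemma dpair_sum:
  assumes "finite P"
  shows "dpair V r (\<lambda>x. \<Sum>p\<in>P. a p * M p x) = (\<Sum>p\<in>P. a p * dpair V r (M p))"
proof -
  have "dpair V r (\<lambda>x. \<Sum>p\<in>P. a p * M p x) = (\<Sum>v\<in>V. \<Sum>p\<in>P. a p * (r v * M p v))"
    unfolding dpair_def by (simp add: sum_distrib_left algebra_simps)
  also have "\<dots> = (\<Sum>p\<in>P. \<Sum>v\<in>V. a p * (r v * M p v))" by (rule sum.swap)
  also have "\<dots> = (\<Sum>p\<in>P. a p * dpair V r (M p))"
    unfolding dpair_def by (simp add: sum_distrib_left)
  finally show ?thesis .
qed

lemma dpair_lin: "dpair V r (\<lambda>x. a * m x + b * m' x) = a * dpair V r m + b * dpair V r m'"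
  unfolding dpair_def by (simp add: sum.distrib sum_distrib_left algebra_simps)

lemma dpair_diff_r: "dpair V (\<lambda>v. r v - q v) m = dpair V r m - dpair V q m"
  unfolding dpair_def by (simp add: sum_subtractf algebra_simps)

lemma iota_Ndag: "iota_star V r \<in> Ndag V"
  unfolding Ndag_def iota_star_def
proof (intro CollectI conjI allI impI)
  fix a b m m' assume "m \<in> Nsp V" "m' \<in> Nsp V"
  thus "(if (\<lambda>x. a * m x + b * m' x) \<in> Nsp V then dpair V r (\<lambda>x. a * m x + b * m' x) else 0) =
        a * (if m \<in> Nsp V then dpair V r m else 0) + b * (if m' \<in> Nsp V then dpair V r m' else 0)"
    using Nsp_lin[of m V m' a b] dpair_lin by simp
qed simp


context psetup
begin

lemma GP_mem: "p \<in> gen_pairs \<Lambda> \<longleftrightarrow> fst p \<in> top_simplices \<Lambda> \<and> snd p \<in> V \<and> snd p \<notin> fst p"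
  unfolding gen_pairs_def by (cases p) auto

lemma GP_fin: "finite (gen_pairs \<Lambda>)"
proof (rule finite_subset)
  show "gen_pairs \<Lambda> \<subseteq> \<Lambda> \<times> V" using GP_mem topD(1) by fastforce
  show "finite (\<Lambda> \<times> V)" using finL finV by simp
qed

lemma GP_Nsp: "p \<in> gen_pairs \<Lambda> \<Longrightarrow> nvec (fst p) (snd p) \<in> Nsp V"
  using GP_mem nvec_Nsp by blast

lemma ncone_Nsp: assumes "m \<in> ncone \<Lambda>" shows "m \<in> Nsp V"
proof -
  obtain a where "m = (\<lambda>x. \<Sum>p\<in>gen_pairs \<Lambda>. a p * nvec (fst p) (snd p) x)"
    using assms unfolding ncone_def by blast
  moreover have "\<forall>p\<in>gen_pairs \<Lambda>. nvec (fst p) (snd p) \<in> Nsp V" using GP_Nsp by blast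
  ultimately show ?thesis using Nsp_sum[OF GP_fin, of "\<lambda>p. nvec (fst p) (snd p)" V a] by simp
qed

lemma ncone_gen:
  assumes s: "s \<in> top_simplices \<Lambda>" and d: "d \<in> V" "d \<notin> s"
  shows "nvec s d \<in> ncone \<Lambda>"
proof -
  have p: "(s, d) \<in> gen_pairs \<Lambda>" using GP_mem s d by simp
  define a :: "(real^'n) set \<times> (real^'n) \<Rightarrow> rat" where "a p = (if p = (s, d) then 1 else 0)" for p
  have "(\<Sum>p\<in>gen_pairs \<Lambda>. a p * nvec (fst p) (snd p) x) = nvec s d x" for x
  proof -
    have "(\<Sum>p\<in>gen_pairs \<Lambda>. a p * nvec (fst p) (snd p) x)
        = (\<Sum>p\<in>gen_pairs \<Lambda>. if p = (s, d) then nvec (fst p) (snd p) x else 0)"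
      by (intro sum.cong) (auto simp: a_def)
    also have "\<dots> = nvec s d x"
      using sum.delta[OF GP_fin, of "(s, d)" "\<lambda>p. nvec (fst p) (snd p) x"] p by simp
    finally show ?thesis .
  qed
  hence "nvec s d = (\<lambda>x. \<Sum>p\<in>gen_pairs \<Lambda>. a p * nvec (fst p) (snd p) x)" by auto
  moreover have "\<forall>p. a p \<ge> 0" by (simp add: a_def)
  ultimately show ?thesis unfolding ncone_def by blast
qed

definition "condC r \<longleftrightarrow> (\<forall>s\<in>top_simplices \<Lambda>. \<forall>d\<in>V - s. dpair V r (nvec s d) \<ge> 0)"

lemma C_eq: "Cplus \<Lambda> = {r\<in>Ddag V. condC r}"
  unfolding Cplus_def condC_def using Kid by auto

lemma ncone_dpair_nonneg:
  assumes "condC r" "m \<in> ncone \<Lambda>" shows "dpair V r m \<ge> 0"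
proof -
  obtain a where a: "\<forall>p. a p \<ge> 0" "m = (\<lambda>x. \<Sum>p\<in>gen_pairs \<Lambda>. a p * nvec (fst p) (snd p) x)"
    using assms(2) unfolding ncone_def by blast
  have "dpair V r m = (\<Sum>p\<in>gen_pairs \<Lambda>. a p * dpair V r (nvec (fst p) (snd p)))"
    unfolding a(2) by (rule dpair_sum[OF GP_fin])
  also have "\<dots> \<ge> 0"
  proof (rule sum_nonneg)
    fix p assume "p \<in> gen_pairs \<Lambda>"
    hence "dpair V r (nvec (fst p) (snd p)) \<ge> 0" using assms(1) GP_mem unfolding condC_def by blast
    thus "a p * dpair V r (nvec (fst p) (snd p)) \<ge> 0" using mult_nonneg_nonneg[OF a(1)[THEN spec, of p]] by blast
  qed
  finally show ?thesis .
qed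

lemma nhat_eq: "nhat \<Lambda> = {r\<in>Ddag V. condC r}"
proof (intro set_eqI iffI)
  fix r assume "r \<in> nhat \<Lambda>"
  hence r: "r \<in> Ddag V" "\<forall>m\<in>ncone \<Lambda>. dpair V r m \<ge> 0" unfolding nhat_def by auto
  have "condC r" unfolding condC_def using r(2) ncone_gen by blast
  thus "r \<in> {r\<in>Ddag V. condC r}" using r(1) by blast
next
  fix r assume "r \<in> {r\<in>Ddag V. condC r}"
  thus "r \<in> nhat \<Lambda>" unfolding nhat_def using ncone_dpair_nonneg by blast
qed

lemma Cplus_nhat: "Cplus \<Lambda> = nhat \<Lambda>"
  using C_eq nhat_eq by simp

lemma nvec_nonneg:
  assumes s: "s \<in> top_simplices \<Lambda>" and d: "d \<in> V" "d \<notin> s" and sp: "sperp \<Lambda> d \<subseteq> s"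
  shows "nvec s d v \<ge> 0"
proof -
  note N = nvec_prop[OF s d]
  obtain c where c: "\<forall>v\<in>sperp \<Lambda> d. c v > 0" "- d = (\<Sum>v\<in>sperp \<Lambda> d. c v *\<^sub>R v)"
    using sperp_prop[OF d(1)] by blast
  have fin: "finite s" using top_fin[OF s] .
  have "(\<Sum>v\<in>insert d s. real_of_rat (nvec s d v) *\<^sub>R v) = real_of_rat (nvec s d d) *\<^sub>R d + (\<Sum>v\<in>s. real_of_rat (nvec s d v) *\<^sub>R v)"
    using fin d(2) by (rule sum.insert)
  hence e1: "(\<Sum>v\<in>s. real_of_rat (nvec s d v) *\<^sub>R v) = - d" using N by (simp add: add_eq_0_iff)
  define k where "k v = (if v \<in> sperp \<Lambda> d then c v else 0)" for v
  have "(\<Sum>v\<in>s. k v *\<^sub>R v) = (\<Sum>v\<in>sperp \<Lambda> d. k v *\<^sub>R v)"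
    by (rule sum_supp[OF fin sp]) (auto simp: k_def)
  also have "\<dots> = (\<Sum>v\<in>sperp \<Lambda> d. c v *\<^sub>R v)" by (intro sum.cong) (auto simp: k_def)
  finally have e2: "(\<Sum>v\<in>s. k v *\<^sub>R v) = - d" using c(2) by simp
  show ?thesis
  proof (cases "v \<in> s")
    case True
    have "real_of_rat (nvec s d v) = k v"
      using lin_unique[OF top_indep[OF s] fin _ True, of "\<lambda>v. real_of_rat (nvec s d v)" k] e1 e2 by simp
    moreover have "k v \<ge> 0" using c(1) by (simp add: k_def less_imp_le)
    ultimately have "real_of_rat (nvec s d v) \<ge> 0" by simp
    thus ?thesis by (simp only: zero_le_of_rat_iff)
  next
    case False
    thus ?thesis using N by (cases "v = d") auto
  qed
qed

lemma dpair_ge: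
  assumes s: "s \<in> top_simplices \<Lambda>" and d: "d \<in> V" "d \<notin> s" and sp: "sperp \<Lambda> d \<subseteq> s"
    and r: "\<forall>v\<in>V. r v \<ge> 0"
  shows "dpair V r (nvec s d) \<ge> r d"
proof -
  have "r d * nvec s d d \<le> (\<Sum>v\<in>V. r v * nvec s d v)"
    using d(1) finV r nvec_nonneg[OF s d sp] by (intro member_le_sum) auto
  thus ?thesis using nvec_prop[OF s d] unfolding dpair_def by simp
qed

lemma partIIa:
  "Cplus \<Lambda> \<inter> Dplus V =
     {r\<in>Dplus V. \<forall>s\<in>top_simplices \<Lambda>. \<forall>d\<in>V - s. \<not> sperp \<Lambda> d \<subseteq> s \<longrightarrow> dpair V r (nvec s d) \<ge> 0}"
proof (intro set_eqI iffI)
  fix r assume "r \<in> Cplus \<Lambda> \<inter> Dplus V"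
  thus "r \<in> {r\<in>Dplus V. \<forall>s\<in>top_simplices \<Lambda>. \<forall>d\<in>V - s. \<not> sperp \<Lambda> d \<subseteq> s \<longrightarrow> dpair V r (nvec s d) \<ge> 0}"
    unfolding C_eq condC_def by blast
next
  fix r assume r: "r \<in> {r\<in>Dplus V. \<forall>s\<in>top_simplices \<Lambda>. \<forall>d\<in>V - s. \<not> sperp \<Lambda> d \<subseteq> s \<longrightarrow> dpair V r (nvec s d) \<ge> 0}"
  have rD: "r \<in> Ddag V" "\<forall>v\<in>V. r v \<ge> 0" using r unfolding Dplus_def by auto
  have "condC r" unfolding condC_def
  proof (intro ballI)
    fix s d assume s: "s \<in> top_simplices \<Lambda>" and d: "d \<in> V - s"
    show "dpair V r (nvec s d) \<ge> 0"
    proof (cases "sperp \<Lambda> d \<subseteq> s")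
      case True
      hence "dpair V r (nvec s d) \<ge> r d" using dpair_ge[OF s _ _ True rD(2)] d by blast
      thus ?thesis using rD(2) d by force
    next
      case False
      thus ?thesis using r s d by blast
    qed
  qed
  thus "r \<in> Cplus \<Lambda> \<inter> Dplus V" unfolding C_eq using rD r by blast
qed

end

lemma dpair_bound:
  assumes "finite V" "\<forall>v\<in>V. \<bar>r' v - r v\<bar> \<le> e"
  shows "dpair V (\<lambda>v. r v - r' v) m \<le> e * (\<Sum>v\<in>V. \<bar>m v\<bar>)"
proof -
  have "dpair V (\<lambda>v. r v - r' v) m \<le> (\<Sum>v\<in>V. e * \<bar>m v\<bar>)"
    unfolding dpair_def
  proof (rule sum_mono)
    fix v assume v: "v \<in> V"
    have "(r v - r' v) * m v \<le> \<bar>(r v - r' v) * m v\<bar>" by (rule abs_ge_self)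
    also have "\<dots> = \<bar>r' v - r v\<bar> * \<bar>m v\<bar>" by (simp add: abs_mult abs_minus_commute)
    also have "\<dots> \<le> e * \<bar>m v\<bar>" using assms(2) v by (intro mult_right_mono) auto
    finally show "(r v - r' v) * m v \<le> e * \<bar>m v\<bar>" .
  qed
  thus ?thesis by (simp add: sum_distrib_left)
qed

lemma dpair_indic:
  assumes "finite V" "d \<in> V"
  shows "dpair V (\<lambda>v. if v = d then c else 0) m = c * m d"
proof -
  have "dpair V (\<lambda>v. if v = d then c else 0) m = (\<Sum>v\<in>V. if v = d then c * m d else 0)"
    unfolding dpair_def by (intro sum.cong) auto
  also have "\<dots> = c * m d" using sum.delta[OF assms(1), of d "\<lambda>_. c * m d"] assms(2) by simp
  finally show ?thesis .
qed

context psetup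
begin

abbreviation "NN p \<equiv> nvec (fst p) (snd p)"

definition "strictC r \<longleftrightarrow> (\<forall>s\<in>top_simplices \<Lambda>. \<forall>d\<in>V - s. dpair V r (nvec s d) > 0)"

lemma strictC_GP: "strictC r \<longleftrightarrow> (\<forall>p\<in>gen_pairs \<Lambda>. dpair V r (NN p) > 0)"
proof
  assume H: "strictC r"
  show "\<forall>p\<in>gen_pairs \<Lambda>. dpair V r (NN p) > 0"
  proof
    fix p assume "p \<in> gen_pairs \<Lambda>"
    hence "fst p \<in> top_simplices \<Lambda>" "snd p \<in> V - fst p" using GP_mem by auto
    thus "dpair V r (NN p) > 0" using H unfolding strictC_def by blast
  qed
next
  assume H: "\<forall>p\<in>gen_pairs \<Lambda>. dpair V r (NN p) > 0"
  show "strictC r" unfolding strictC_def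
  proof (intro ballI)
    fix s d assume "s \<in> top_simplices \<Lambda>" "d \<in> V - s"
    hence "(s, d) \<in> gen_pairs \<Lambda>" using GP_mem by simp
    thus "dpair V r (nvec s d) > 0" using H by fastforce
  qed
qed

lemma e_exists:
  assumes "strictC r"
  shows "\<exists>e>0. \<forall>p\<in>gen_pairs \<Lambda>. e * (1 + (\<Sum>v\<in>V. \<bar>NN p v\<bar>)) \<le> dpair V r (NN p)"
proof -
  define q where "q p = dpair V r (NN p) / (1 + (\<Sum>v\<in>V. \<bar>NN p v\<bar>))" for p
  define E where "E = insert 1 (q ` gen_pairs \<Lambda>)"
  have finE: "finite E" unfolding E_def using GP_fin by simp
  have S0: "(\<Sum>v\<in>V. \<bar>NN p v\<bar>) \<ge> 0" for p by (simp add: sum_nonneg)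
  have qpos: "q p > 0" if "p \<in> gen_pairs \<Lambda>" for p
    using assms that S0[of p] unfolding strictC_GP q_def
    by (intro divide_pos_pos) (auto simp: add_pos_nonneg)
  define e where "e = Min E"
  have epos: "e > 0" unfolding e_def E_def using finE qpos unfolding E_def
    by (subst Min_gr_iff) auto
  have "e * (1 + (\<Sum>v\<in>V. \<bar>NN p v\<bar>)) \<le> dpair V r (NN p)" if p: "p \<in> gen_pairs \<Lambda>" for p
  proof -
    have "e \<le> q p" unfolding e_def using finE p unfolding E_def by (intro Min_le) auto
    moreover have "1 + (\<Sum>v\<in>V. \<bar>NN p v\<bar>) > 0" using S0[of p] by linarith
    ultimately show ?thesis unfolding q_def by (simp add: pos_le_divide_eq)
  qed
  thus ?thesis using epos by blast
qed

lemma Cplus_Ddag: "Cplus \<Lambda> \<subseteq> Ddag V" unfolding Cplus_def by blast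

lemma DI: "Dinterior V (Cplus \<Lambda>) = {r\<in>Ddag V. strictC r}"
proof (intro set_eqI iffI)
  fix r assume "r \<in> Dinterior V (Cplus \<Lambda>)"
  then obtain e where r: "r \<in> Cplus \<Lambda>" and e: "e > 0"
    and H: "\<forall>r'\<in>Ddag V. (\<forall>v\<in>V. \<bar>r' v - r v\<bar> < e) \<longrightarrow> r' \<in> Cplus \<Lambda>"
    unfolding Dinterior_def by blast
  have rD: "r \<in> Ddag V" using r Cplus_Ddag by blast
  have "strictC r" unfolding strictC_def
  proof (intro ballI)
    fix s d assume s: "s \<in> top_simplices \<Lambda>" and d: "d \<in> V - s"
    define r' where "r' v = r v - (if v = d then e/2 else 0)" for v
    have "r' \<in> Ddag V" using rD d unfolding Ddag_def r'_def by auto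
    moreover have "\<forall>v\<in>V. \<bar>r' v - r v\<bar> < e" using e unfolding r'_def by auto
    ultimately have "r' \<in> Cplus \<Lambda>" using H by blast
    hence "dpair V r' (nvec s d) \<ge> 0" unfolding C_eq condC_def using s d by blast
    moreover have "dpair V r' (nvec s d) = dpair V r (nvec s d) - e/2"
    proof -
      have "dpair V r' (nvec s d) = dpair V r (nvec s d) - dpair V (\<lambda>v. if v = d then e/2 else 0) (nvec s d)"
        unfolding r'_def by (rule dpair_diff_r)
      also have "\<dots> = dpair V r (nvec s d) - e/2 * nvec s d d"
        using dpair_indic[OF finV, of d "e/2" "nvec s d"] d by simp
      finally show ?thesis using nvec_prop[of s d] s d by simp
    qed
    ultimately show "dpair V r (nvec s d) > 0" using e by simp
  qed
  thus "r \<in> {r\<in>Ddag V. strictC r}" using rD by blast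
next
  fix r assume "r \<in> {r\<in>Ddag V. strictC r}"
  hence rD: "r \<in> Ddag V" and st: "strictC r" by auto
  obtain e where e: "e > 0" and eb: "\<forall>p\<in>gen_pairs \<Lambda>. e * (1 + (\<Sum>v\<in>V. \<bar>NN p v\<bar>)) \<le> dpair V r (NN p)"
    using e_exists[OF st] by blast
  have rC: "r \<in> Cplus \<Lambda>" using rD st unfolding C_eq condC_def strictC_def by (auto intro: less_imp_le)
  have "r' \<in> Cplus \<Lambda>" if r': "r' \<in> Ddag V" "\<forall>v\<in>V. \<bar>r' v - r v\<bar> < e" for r'
  proof -
    have "condC r'" unfolding condC_def
    proof (intro ballI)
      fix s d assume s: "s \<in> top_simplices \<Lambda>" and d: "d \<in> V - s"
      have p: "(s, d) \<in> gen_pairs \<Lambda>" using GP_mem s d by simp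
      define S where "S = (\<Sum>v\<in>V. \<bar>nvec s d v\<bar>)"
      have S0: "S \<ge> 0" unfolding S_def by (simp add: sum_nonneg)
      have b1: "e * (1 + S) \<le> dpair V r (nvec s d)" using eb p unfolding S_def by auto
      have b2: "dpair V (\<lambda>v. r v - r' v) (nvec s d) \<le> e * S"
        unfolding S_def using r'(2) by (intro dpair_bound[OF finV]) (auto intro: less_imp_le)
      have "dpair V (\<lambda>v. r v - r' v) (nvec s d) = dpair V r (nvec s d) - dpair V r' (nvec s d)"
        by (rule dpair_diff_r)
      moreover have "e * S \<le> e * (1 + S)" using e by simp
      ultimately show "dpair V r' (nvec s d) \<ge> 0" using b1 b2 by linarith
    qed
    thus ?thesis unfolding C_eq using r'(1) by blast
  qed
  thus "r \<in> Dinterior V (Cplus \<Lambda>)" unfolding Dinterior_def using rC e by blast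
qed

lemma partIIb:
  "Dinterior V (Cplus \<Lambda>) \<inter> Dplus_int V =
     {r\<in>Dplus_int V. \<forall>s\<in>top_simplices \<Lambda>. \<forall>d\<in>V - s. \<not> sperp \<Lambda> d \<subseteq> s \<longrightarrow> dpair V r (nvec s d) > 0}"
proof (intro set_eqI iffI)
  fix r assume "r \<in> Dinterior V (Cplus \<Lambda>) \<inter> Dplus_int V"
  thus "r \<in> {r\<in>Dplus_int V. \<forall>s\<in>top_simplices \<Lambda>. \<forall>d\<in>V - s. \<not> sperp \<Lambda> d \<subseteq> s \<longrightarrow> dpair V r (nvec s d) > 0}"
    unfolding DI strictC_def by blast
next
  fix r assume r: "r \<in> {r\<in>Dplus_int V. \<forall>s\<in>top_simplices \<Lambda>. \<forall>d\<in>V - s. \<not> sperp \<Lambda> d \<subseteq> s \<longrightarrow> dpair V r (nvec s d) > 0}"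
  have rD: "r \<in> Ddag V" "\<forall>v\<in>V. r v > 0" using r unfolding Dplus_int_def by auto
  have rD': "\<forall>v\<in>V. r v \<ge> 0" using rD(2) by (auto intro: less_imp_le)
  have "strictC r" unfolding strictC_def
  proof (intro ballI)
    fix s d assume s: "s \<in> top_simplices \<Lambda>" and d: "d \<in> V - s"
    show "dpair V r (nvec s d) > 0"
    proof (cases "sperp \<Lambda> d \<subseteq> s")
      case True
      hence "dpair V r (nvec s d) \<ge> r d" using dpair_ge[OF s _ _ True rD'] d by blast
      moreover have "r d > 0" using rD(2) d by blast
      ultimately show ?thesis by linarith
    next
      case False
      thus ?thesis using r s d by blast
    qed
  qed
  thus "r \<in> Dinterior V (Cplus \<Lambda>) \<inter> Dplus_int V" unfolding DI using rD r by blast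
qed


lemma top_ex: "\<exists>s0. s0 \<in> top_simplices \<Lambda>"
  using top_exists unfolding top_simplices_def by blast

lemma nsp_decomp:
  assumes s0: "s0 \<in> top_simplices \<Lambda>" and m: "m \<in> Nsp V"
  shows "m = (\<lambda>x. \<Sum>v\<in>V - s0. m v * nvec s0 v x)"
proof -
  define T where "T = (\<lambda>x. \<Sum>v\<in>V - s0. m v * nvec s0 v x)"
  have finD: "finite (V - s0)" using finV by simp
  have NV: "\<forall>v\<in>V - s0. nvec s0 v \<in> Nsp V" using nvec_Nsp[OF s0] by blast
  have TN: "T \<in> Nsp V" unfolding T_def using Nsp_sum[OF finD NV] .
  have DN: "(\<lambda>x. 1 * m x + (-1) * T x) \<in> Nsp V" using Nsp_lin[OF m TN] .
  have mD: "m \<in> Ddag V" using m unfolding Nsp_def by blast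
  have off: "m x = T x" if x: "x \<notin> s0" for x
  proof (cases "x \<in> V")
    case False
    have "nvec s0 v x = 0" if "v \<in> V - s0" for v
      using nvec_prop[OF s0, of v] that False x by auto
    hence "T x = 0" unfolding T_def by simp
    moreover have "m x = 0" using mD False unfolding Ddag_def by blast
    ultimately show ?thesis by simp
  next
    case True
    have "T x = (\<Sum>v\<in>V - s0. if v = x then m x else 0)"
      unfolding T_def
    proof (rule sum.cong[OF HOL.refl])
      fix v assume v: "v \<in> V - s0"
      show "m v * nvec s0 v x = (if v = x then m x else 0)"
        using nvec_prop[OF s0, of v] v x by (cases "v = x") auto
    qed
    also have "\<dots> = m x" using sum.delta[OF finD, of x "\<lambda>_. m x"] True x by simp
    finally show ?thesis by simp
  qed
  define D where "D x = 1 * m x + (-1) * T x" for x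
  have D0: "\<forall>x. x \<notin> s0 \<longrightarrow> D x = 0" using off unfolding D_def by simp
  have "(\<Sum>x\<in>V. real_of_rat (D x) *\<^sub>R x) = 0" using DN unfolding Nsp_def D_def by simp
  moreover have "(\<Sum>x\<in>V. real_of_rat (D x) *\<^sub>R x) = (\<Sum>x\<in>s0. real_of_rat (D x) *\<^sub>R x)"
    by (rule sum_supp[OF finV top_subV[OF s0]]) (use D0 in auto)
  ultimately have "(\<Sum>x\<in>s0. real_of_rat (D x) *\<^sub>R x) = (\<Sum>x\<in>s0. (\<lambda>_. 0) x *\<^sub>R x)" by simp
  hence Ds: "real_of_rat (D x) = 0" if "x \<in> s0" for x
    using lin_unique[OF top_indep[OF s0] top_fin[OF s0] _ that, of "\<lambda>x. real_of_rat (D x)" "\<lambda>_. 0"] by simp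
  have D00: "D x = 0" for x
  proof (cases "x \<in> s0")
    case True thus ?thesis using Ds[OF True] by simp
  next
    case False thus ?thesis using D0 by blast
  qed
  have "m x = T x" for x
  proof -
    have "1 * m x + (-1) * T x = 0" using D00[of x] unfolding D_def .
    thus ?thesis by linarith
  qed
  thus ?thesis unfolding T_def by (rule ext)
qed

lemma lift:
  assumes f: "f \<in> Ndag V"
  shows "\<exists>r0\<in>Ddag V. iota_star V r0 = f"
proof -
  obtain s0 where s0: "s0 \<in> top_simplices \<Lambda>" using top_ex by blast
  define r0 where "r0 v = (if v \<in> V - s0 then f (nvec s0 v) else 0)" for v
  have r0D: "r0 \<in> Ddag V" unfolding Ddag_def r0_def by auto
  have finD: "finite (V - s0)" using finV by simp
  have NV: "\<forall>v\<in>V - s0. nvec s0 v \<in> Nsp V" using nvec_Nsp[OF s0] by blast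
  have "iota_star V r0 m = f m" for m
  proof (cases "m \<in> Nsp V")
    case True
    have "f m = f (\<lambda>x. \<Sum>v\<in>V - s0. m v * nvec s0 v x)" using nsp_decomp[OF s0 True] by simp
    also have "\<dots> = (\<Sum>v\<in>V - s0. m v * f (nvec s0 v))" by (rule Ndag_sum[OF f finD NV])
    also have "\<dots> = (\<Sum>v\<in>V - s0. r0 v * m v)" by (intro sum.cong) (auto simp: r0_def)
    also have "\<dots> = (\<Sum>v\<in>V. r0 v * m v)"
      by (rule sum_supp[OF finV, symmetric]) (auto simp: r0_def)
    finally show ?thesis using True unfolding iota_star_def dpair_def by simp
  next
    case False
    thus ?thesis using f unfolding iota_star_def Ndag_def by simp
  qed
  thus ?thesis using r0D by blast
qed

lemma betastar_Ddag: "betastar V \<subseteq> Ddag V" unfolding betastar_def by blast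

lemma iota_shift:
  assumes "b \<in> betastar V"
  shows "iota_star V (\<lambda>v. r v - b v) = iota_star V r"
proof
  fix m show "iota_star V (\<lambda>v. r v - b v) m = iota_star V r m"
    unfolding iota_star_def using dpair_diff_r[of V r b m] betastar_Nsp[OF finV assms, of m] by simp
qed

lemma dpair_shift_N:
  assumes "b \<in> betastar V" "s \<in> top_simplices \<Lambda>" "d \<in> V - s"
  shows "dpair V (\<lambda>v. r v - b v) (nvec s d) = dpair V r (nvec s d)"
proof -
  have d: "d \<in> V" "d \<notin> s" using assms(3) by auto
  show ?thesis using dpair_diff_r[of V r b "nvec s d"] betastar_Nsp[OF finV assms(1) nvec_Nsp[OF assms(2) d]] by simp
qed

lemma Ddag_diff: "r \<in> Ddag V \<Longrightarrow> b \<in> Ddag V \<Longrightarrow> (\<lambda>v. r v - b v) \<in> Ddag V"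
  unfolding Ddag_def by simp

lemma iota_ncone: "m \<in> ncone \<Lambda> \<Longrightarrow> iota_star V r m = dpair V r m"
  using ncone_Nsp unfolding iota_star_def by simp

lemma partIIc: "iota_star V ` (Cplus \<Lambda> \<inter> Dplus V) = ndag_cone \<Lambda>"
proof (intro set_eqI iffI)
  fix f assume "f \<in> iota_star V ` (Cplus \<Lambda> \<inter> Dplus V)"
  then obtain r where r: "r \<in> Cplus \<Lambda>" and f: "f = iota_star V r" by blast
  have "\<forall>m\<in>ncone \<Lambda>. f m \<ge> 0"
    using r unfolding f C_eq using ncone_dpair_nonneg iota_ncone by auto
  thus "f \<in> ndag_cone \<Lambda>" unfolding ndag_cone_def f using iota_Ndag by blast
next
  fix f assume "f \<in> ndag_cone \<Lambda>"
  hence fN: "f \<in> Ndag V" and fp: "\<forall>m\<in>ncone \<Lambda>. f m \<ge> 0" unfolding ndag_cone_def by auto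
  obtain r0 where r0: "r0 \<in> Ddag V" "iota_star V r0 = f" using lift[OF fN] by blast
  obtain s0 where s0: "s0 \<in> top_simplices \<Lambda>" using top_ex by blast
  define b where "b = rho_prime \<Lambda> r0 s0"
  have b: "b \<in> betastar V" "\<forall>d\<in>s0. b d = r0 d" using rho_prop[OF s0, of r0] unfolding b_def by auto
  define r where "r v = r0 v - b v" for v
  have rD: "r \<in> Ddag V" unfolding r_def using Ddag_diff r0(1) betastar_Ddag b(1) by blast
  have c0: "condC r0" unfolding condC_def
  proof (intro ballI)
    fix s d assume "s \<in> top_simplices \<Lambda>" "d \<in> V - s"
    hence "nvec s d \<in> ncone \<Lambda>" using ncone_gen by blast
    thus "dpair V r0 (nvec s d) \<ge> 0" using fp r0(2) iota_ncone by metis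
  qed
  have "condC r" unfolding condC_def r_def
    using dpair_shift_N[OF b(1)] c0 unfolding condC_def by simp
  hence rC: "r \<in> Cplus \<Lambda>" unfolding C_eq using rD by blast
  have "\<forall>v\<in>V. r v \<ge> 0"
  proof
    fix v assume v: "v \<in> V"
    show "r v \<ge> 0"
    proof (cases "v \<in> s0")
      case True thus ?thesis using b(2) unfolding r_def by simp
    next
      case False
      hence rv: "r v = dpair V r0 (nvec s0 v)" unfolding r_def b_def using Kid[OF s0 v False] by simp
      have "dpair V r0 (nvec s0 v) \<ge> 0" using c0 s0 v False unfolding condC_def by blast
      thus ?thesis using rv by simp
    qed
  qed
  hence "r \<in> Dplus V" unfolding Dplus_def using rD by blast
  moreover have "iota_star V r = f" using iota_shift[OF b(1), of r0] r0(2) unfolding r_def by simp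
  ultimately show "f \<in> iota_star V ` (Cplus \<Lambda> \<inter> Dplus V)" using rC by blast
qed

end

context psetup
begin

lemma partIId: "iota_star V ` (Dinterior V (Cplus \<Lambda>) \<inter> Dplus_int V) = Ninterior V (ndag_cone \<Lambda>)"
proof (intro set_eqI iffI)
  fix f assume "f \<in> iota_star V ` (Dinterior V (Cplus \<Lambda>) \<inter> Dplus_int V)"
  then obtain r where rI: "r \<in> Dinterior V (Cplus \<Lambda>)" and rP: "r \<in> Dplus_int V" and f: "f = iota_star V r"
    by blast
  have rD: "r \<in> Ddag V" and st: "strictC r" using rI unfolding DI by auto
  have rC: "r \<in> Cplus \<Lambda>" using rI unfolding Dinterior_def by blast
  have rP': "r \<in> Dplus V" using rP unfolding Dplus_def Dplus_int_def by (auto intro: less_imp_le)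
  have fC: "f \<in> ndag_cone \<Lambda>" using partIIc rC rP' f by blast
  obtain e where e: "e > 0" and eb: "\<forall>p\<in>gen_pairs \<Lambda>. e * (1 + (\<Sum>v\<in>V. \<bar>NN p v\<bar>)) \<le> dpair V r (NN p)"
    using e_exists[OF st] by blast
  have "g \<in> ndag_cone \<Lambda>" if g: "g \<in> Ndag V" "\<forall>m\<in>Nsp V. \<bar>g m - f m\<bar> \<le> e * (\<Sum>v\<in>V. \<bar>m v\<bar>)" for g
  proof -
    have gp: "g (NN p) \<ge> 0" if p: "p \<in> gen_pairs \<Lambda>" for p
    proof -
      have NS: "NN p \<in> Nsp V" using GP_Nsp[OF p] .
      define S where "S = (\<Sum>v\<in>V. \<bar>NN p v\<bar>)"
      have b1: "e * (1 + S) \<le> dpair V r (NN p)" using eb p unfolding S_def by blast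
      have b2: "\<bar>g (NN p) - f (NN p)\<bar> \<le> e * S" using g(2) NS unfolding S_def by blast
      have fN: "f (NN p) = dpair V r (NN p)" using NS unfolding f iota_star_def by simp
      have "e * (1 + S) = e + e * S" by (simp add: algebra_simps)
      thus ?thesis using b1 b2 fN e by linarith
    qed
    have "g m \<ge> 0" if m: "m \<in> ncone \<Lambda>" for m
    proof -
      obtain a where a: "\<forall>p. a p \<ge> 0" "m = (\<lambda>x. \<Sum>p\<in>gen_pairs \<Lambda>. a p * NN p x)"
        using m unfolding ncone_def by blast
      have NV: "\<forall>p\<in>gen_pairs \<Lambda>. NN p \<in> Nsp V" using GP_Nsp by blast
      have "g m = (\<Sum>p\<in>gen_pairs \<Lambda>. a p * g (NN p))"
        unfolding a(2) by (rule Ndag_sum[OF g(1) GP_fin NV])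
      also have "\<dots> \<ge> 0"
      proof (rule sum_nonneg)
        fix p assume "p \<in> gen_pairs \<Lambda>"
        thus "a p * g (NN p) \<ge> 0" using mult_nonneg_nonneg[OF a(1)[THEN spec, of p] gp] by blast
      qed
      finally show ?thesis .
    qed
    thus ?thesis unfolding ndag_cone_def using g(1) by blast
  qed
  thus "f \<in> Ninterior V (ndag_cone \<Lambda>)" unfolding Ninterior_def using fC e by blast
next
  fix f assume "f \<in> Ninterior V (ndag_cone \<Lambda>)"
  then obtain e where fC: "f \<in> ndag_cone \<Lambda>" and e: "e > 0"
    and H: "\<forall>g\<in>Ndag V. (\<forall>m\<in>Nsp V. \<bar>g m - f m\<bar> \<le> e * (\<Sum>v\<in>V. \<bar>m v\<bar>)) \<longrightarrow> g \<in> ndag_cone \<Lambda>"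
    unfolding Ninterior_def by blast
  have fN: "f \<in> Ndag V" using fC unfolding ndag_cone_def by blast
  obtain r0 where r0: "r0 \<in> Ddag V" "iota_star V r0 = f" using lift[OF fN] by blast
  have st0: "strictC r0" unfolding strictC_def
  proof (intro ballI)
    fix s d assume s: "s \<in> top_simplices \<Lambda>" and d: "d \<in> V - s"
    define g where "g m = (if m \<in> Nsp V then f m - e * m d else 0)" for m
    have gN: "g \<in> Ndag V" unfolding Ndag_def
    proof (intro CollectI conjI allI impI)
      fix m assume "m \<notin> Nsp V" thus "g m = 0" unfolding g_def by simp
    next
      fix a b m m' assume mm: "m \<in> Nsp V" "m' \<in> Nsp V"
      have "f (\<lambda>x. a * m x + b * m' x) = a * f m + b * f m'" using fN mm unfolding Ndag_def by blast
      moreover have "(\<lambda>x. a * m x + b * m' x) \<in> Nsp V" using Nsp_lin[OF mm] .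
      ultimately show "g (\<lambda>x. a * m x + b * m' x) = a * g m + b * g m'"
        unfolding g_def using mm by (simp add: algebra_simps)
    qed
    have "\<forall>m\<in>Nsp V. \<bar>g m - f m\<bar> \<le> e * (\<Sum>v\<in>V. \<bar>m v\<bar>)"
    proof
      fix m assume m: "m \<in> Nsp V"
      have "\<bar>m d\<bar> \<le> (\<Sum>v\<in>V. \<bar>m v\<bar>)" using d finV by (intro member_le_sum) auto
      hence "e * \<bar>m d\<bar> \<le> e * (\<Sum>v\<in>V. \<bar>m v\<bar>)" using e by (intro mult_left_mono) auto
      thus "\<bar>g m - f m\<bar> \<le> e * (\<Sum>v\<in>V. \<bar>m v\<bar>)" unfolding g_def using m e by (simp add: abs_mult)
    qed
    hence "g \<in> ndag_cone \<Lambda>" using H gN by blast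
    moreover have Nc: "nvec s d \<in> ncone \<Lambda>" using ncone_gen s d by blast
    ultimately have "g (nvec s d) \<ge> 0" unfolding ndag_cone_def by blast
    moreover have NS: "nvec s d \<in> Nsp V" using ncone_Nsp[OF Nc] .
    moreover have "nvec s d d = 1" using nvec_prop[of s d] s d by blast
    ultimately have "f (nvec s d) \<ge> e" unfolding g_def by simp
    moreover have "f (nvec s d) = dpair V r0 (nvec s d)"
      using NS r0(2)[symmetric] unfolding iota_star_def by simp
    ultimately show "dpair V r0 (nvec s d) > 0" using e by simp
  qed
  obtain ep where ep: "ep > 0" and epb: "\<forall>p\<in>gen_pairs \<Lambda>. ep * (1 + (\<Sum>v\<in>V. \<bar>NN p v\<bar>)) \<le> dpair V r0 (NN p)"
    using e_exists[OF st0] by blast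
  obtain s0 where s0: "s0 \<in> top_simplices \<Lambda>" using top_ex by blast
  define r1 where "r1 v = (if v \<in> V then r0 v - ep else 0)" for v
  define b where "b = rho_prime \<Lambda> r1 s0"
  have b: "b \<in> betastar V" "\<forall>d\<in>s0. b d = r1 d" using rho_prop[OF s0, of r1] unfolding b_def by auto
  define r where "r v = r0 v - b v" for v
  have rD: "r \<in> Ddag V" unfolding r_def using Ddag_diff r0(1) betastar_Ddag b(1) by blast
  have "strictC r" unfolding strictC_def r_def
    using dpair_shift_N[OF b(1)] st0 unfolding strictC_def by simp
  hence rI: "r \<in> Dinterior V (Cplus \<Lambda>)" unfolding DI using rD by blast
  have "\<forall>v\<in>V. r v > 0"
  proof
    fix v assume v: "v \<in> V"
    show "r v > 0"
    proof (cases "v \<in> s0")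
      case True thus ?thesis using b(2) v ep unfolding r_def r1_def by simp
    next
      case False
      have p: "(s0, v) \<in> gen_pairs \<Lambda>" using GP_mem s0 v False by simp
      define S where "S = (\<Sum>w\<in>V. \<bar>nvec s0 v w\<bar>)"
      have k: "dpair V r1 (nvec s0 v) = r1 v - b v" using Kid[OF s0 v False, of r1] unfolding b_def .
      have "dpair V r1 (nvec s0 v) = dpair V (\<lambda>w. r0 w - ep) (nvec s0 v)"
        unfolding dpair_def r1_def by (intro sum.cong) auto
      also have "\<dots> = dpair V r0 (nvec s0 v) - dpair V (\<lambda>w. ep) (nvec s0 v)" by (rule dpair_diff_r)
      finally have k2: "dpair V r1 (nvec s0 v) = dpair V r0 (nvec s0 v) - dpair V (\<lambda>w. ep) (nvec s0 v)" .
      have "dpair V (\<lambda>w. ep) (nvec s0 v) \<le> (\<Sum>w\<in>V. ep * \<bar>nvec s0 v w\<bar>)"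
        unfolding dpair_def using ep by (intro sum_mono mult_left_mono) auto
      hence k3: "dpair V (\<lambda>w. ep) (nvec s0 v) \<le> ep * S" unfolding S_def by (simp add: sum_distrib_left)
      have k4: "ep * (1 + S) \<le> dpair V r0 (nvec s0 v)" using epb p unfolding S_def by auto
      have k5: "ep * (1 + S) = ep + ep * S" by (simp add: algebra_simps)
      have "r v = r0 v - b v" unfolding r_def ..
      moreover have "r1 v = r0 v - ep" using v unfolding r1_def by simp
      ultimately show ?thesis using k k2 k3 k4 k5 ep by linarith
    qed
  qed
  hence "r \<in> Dplus_int V" unfolding Dplus_int_def using rD by blast
  moreover have "iota_star V r = f" using iota_shift[OF b(1), of r0] r0(2) unfolding r_def by simp
  ultimately show "f \<in> iota_star V ` (Dinterior V (Cplus \<Lambda>) \<inter> Dplus_int V)" using rI by blast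
qed

end

theorem proposition2p1:
  fixes \<Delta> :: "(real ^ 'n::finite) set"
    and \<Lambda> :: "(real ^ 'n) set set"
  assumes refl: "reflexive_polytope \<Delta>"
    and decomp: "simplicial_decomp \<Lambda> (frontier \<Delta>)"
    and vert: "verts \<Lambda> = admissible_pts \<Delta>"
    and gen: "lattice_generated_by (verts \<Lambda>)"
  shows "Cplus \<Lambda> = nhat \<Lambda> \<and>
         Cplus \<Lambda> \<inter> Dplus (verts \<Lambda>) =
           {r\<in>Dplus (verts \<Lambda>). \<forall>s\<in>top_simplices \<Lambda>. \<forall>d\<in>verts \<Lambda> - s.
              \<not> sperp \<Lambda> d \<subseteq> s \<longrightarrow> dpair (verts \<Lambda>) r (nvec s d) \<ge> 0} \<and>
         Dinterior (verts \<Lambda>) (Cplus \<Lambda>) \<inter> Dplus_int (verts \<Lambda>) =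
           {r\<in>Dplus_int (verts \<Lambda>). \<forall>s\<in>top_simplices \<Lambda>. \<forall>d\<in>verts \<Lambda> - s.
              \<not> sperp \<Lambda> d \<subseteq> s \<longrightarrow> dpair (verts \<Lambda>) r (nvec s d) > 0} \<and>
         iota_star (verts \<Lambda>) ` (Cplus \<Lambda> \<inter> Dplus (verts \<Lambda>)) = ndag_cone \<Lambda> \<and>
         iota_star (verts \<Lambda>) ` (Dinterior (verts \<Lambda>) (Cplus \<Lambda>) \<inter> Dplus_int (verts \<Lambda>)) =
           Ninterior (verts \<Lambda>) (ndag_cone \<Lambda>)"
proof -
  interpret psetup \<Delta> \<Lambda> using refl decomp vert by unfold_locales
  show ?thesis using Cplus_nhat partIIa partIIb partIIc partIId by blast
qed

end
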